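(* For $\mathbf m\in\Xi$ regarded as a finite $W$-orbit in $\mathcal C\times\mathcal C$, let $E_1(\mathbf m)=\mathrm{Fun}(\mathbf m)$ be the $\mathbf k$-vector space of functions $\mathbf m\to\mathbf k$; for $\mathbf m\ge'\mathbf n$ let $\partial'_{\mathbf m,\mathbf n}=(\pi_{\mathbf m,\mathbf n})_*$ (summation over fibers) and for $\mathbf m\ge''\mathbf n$ let $\partial''_{\mathbf m,\mathbf n}=\pi_{\mathbf m,\mathbf n}^*$ (pullback). Then $E_1=(E_1(\mathbf m),\partial',\partial'')$ is a mixed Bruhat sheaf of type $(W,S)$.
   Context: $\mathfrak h_\mathbb R$ finite-dimensional real Euclidean space, $W\subset O(\mathfrak h_\mathbb R)$ finite reflection group (here a Weyl group), $\mathcal C$ the faces of its hyperplane arrangement ordered by $A\le B$ iff $A\subset\overline B$; chamber $C^+$, $S$ reflections in its walls, $W_I=\langle I\rangle$, $C^+_I$ the face of $\overline{C^+}$ open in $\bigcap_{s\in I}H_s$, $\bigsqcup_IW/W_I\cong\mathcal C$. $\Xi=W\backslash(\mathcal C\times\mathcal C)=\bigsqcup\Xi(I,J)$, $\Xi(I,J)=W\backslash(W/W_I\times W/W_J)$, order induced by the product order; $\mathbf m\ge'\mathbf n$ ($\ge''$) if $\mathbf n$ is obtained from $\mathbf m$ by projecting cosets in the first (second) factor. For $\mathbf m\ge\mathbf n$, $\pi_{\mathbf m,\mathbf n}:\mathbf m\to\mathbf n$ is the surjective $W$-map induced by the coset projections. $\mathrm{Sup}(\mathbf m',\mathbf n)=\{\mathbf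 m:\mathbf m\ge''\mathbf m',\mathbf m\ge'\mathbf n\}$. $\mathfrak h=\mathfrak h_\mathbb R\oplus i\mathfrak h_\mathbb R$, $p:\mathfrak h\to W\backslash\mathfrak h$, $U_{\mathbf m}=p(iC+D)$ for $\mathbf m=W(C,D)$, $\mathcal S^{(0)}$ the stratification by images of generic parts of complexified flats; anodyne: cells in the same $\mathcal S^{(0)}$-stratum. $\mathbf k$ algebraically closed of characteristic $0$. Mixed Bruhat sheaf: spaces $E(\mathbf m)$ with maps $\partial'_{\mathbf m,\mathbf n}:E(\mathbf m)\to E(\mathbf n)$ ($\mathbf m\ge'\mathbf n$), $\partial''_{\mathbf m,\mathbf n}:E(\mathbf n)\to E(\mathbf m)$ ($\mathbf m\ge''\mathbf n$) satisfying (MBS1) functoriality of $\partial'$ and $\partial''$; (MBS2) for $\mathbf m'\ge'\mathbf n'$, $\mathbf n\ge''\mathbf n'$: $\partial''_{\mathbf n,\mathbf n'}\partial'_{\mathbf m',\mathbf n'}=\sum_{\mathbf m\in\mathrm{Sup}(\mathbf m',\mathbf n)}\partial'_{\mathbf m,\mathbf n}\partial''_{\mathbf m,\mathbf m'}$; (MBS3) anodyne $\partial'$, $\partial''$ are isomorphisms. *)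

theory Defs
  imports "HOL-Analysis.Analysis" "HOL-Computational_Algebra.Polynomial"
begin

definition refl_vec :: "'a::real_inner \<Rightarrow> 'a \<Rightarrow> 'a" where
  "refl_vec a v = v - (2 * (v \<bullet> a) / (a \<bullet> a)) *\<^sub>R a"

definition reflections :: "('a::real_inner \<Rightarrow> 'a) set \<Rightarrow> ('a \<Rightarrow> 'a) set" where
  "reflections W = {s \<in> W. \<exists>a. a \<noteq> 0 \<and> s = refl_vec a}"

definition roots :: "('a::real_inner \<Rightarrow> 'a) set \<Rightarrow> 'a set" where
  "roots W = {a. a \<noteq> 0 \<and> refl_vec a \<in> W}"

definition finite_reflection_group :: "('a::euclidean_space \<Rightarrow> 'a) set \<Rightarrow> bool" where
  "finite_reflection_group W \<longleftrightarrow>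
     finite W \<and> id \<in> W \<and> (\<forall>v\<in>W. \<forall>w\<in>W. v \<circ> w \<in> W) \<and>
     (\<forall>w\<in>W. orthogonal_transformation w) \<and>
     (\<forall>w\<in>W. \<exists>rs. set rs \<subseteq> reflections W \<and> w = foldr (\<circ>) rs id)"

definition int_span :: "'a::real_vector set \<Rightarrow> 'a set" where
  "int_span B = {v. \<exists>c. (\<forall>b\<in>B. c b \<in> \<int>) \<and> v = (\<Sum>b\<in>B. c b *\<^sub>R b)}"

text \<open>Weyl group = crystallographic: W stabilises a full lattice.\<close>
definition crystallographic :: "('a::euclidean_space \<Rightarrow> 'a) set \<Rightarrow> bool" where
  "crystallographic W \<longleftrightarrow>
     (\<exists>B. independent B \<and> span B = UNIV \<and> (\<forall>w\<in>W. \<forall>b\<in>B. w b \<in> int_span B))"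

definition arr_face :: "('a::real_inner \<Rightarrow> 'a) set \<Rightarrow> 'a \<Rightarrow> 'a set" where
  "arr_face W x = {y. \<forall>a\<in>roots W. sgn (a \<bullet> y) = sgn (a \<bullet> x)}"

definition arr_faces :: "('a::real_inner \<Rightarrow> 'a) set \<Rightarrow> 'a set set" where
  "arr_faces W = range (arr_face W)"

definition face_le :: "'a::topological_space set \<Rightarrow> 'a set \<Rightarrow> bool" where
  "face_le A B \<longleftrightarrow> A \<subseteq> closure B"

definition pair_orbit :: "('a \<Rightarrow> 'a) set \<Rightarrow> 'a set \<times> 'a set \<Rightarrow> ('a set \<times> 'a set) set" where
  "pair_orbit W p = {(w ` fst p, w ` snd p) | w. w \<in> W}"

definition Xi :: "('a::real_inner \<Rightarrow> 'a) set \<Rightarrow> ('a set \<times> 'a set) set set" where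
  "Xi W = pair_orbit W ` (arr_faces W \<times> arr_faces W)"

definition xi_ge1 :: "('a::real_inner \<Rightarrow> 'a) set \<Rightarrow> ('a set \<times> 'a set) set \<Rightarrow> ('a set \<times> 'a set) set \<Rightarrow> bool" where
  "xi_ge1 W m n \<longleftrightarrow> m \<in> Xi W \<and> n \<in> Xi W \<and>
     (\<exists>C D C'. (C, D) \<in> m \<and> (C', D) \<in> n \<and> face_le C' C)"

definition xi_ge2 :: "('a::real_inner \<Rightarrow> 'a) set \<Rightarrow> ('a set \<times> 'a set) set \<Rightarrow> ('a set \<times> 'a set) set \<Rightarrow> bool" where
  "xi_ge2 W m n \<longleftrightarrow> m \<in> Xi W \<and> n \<in> Xi W \<and>
     (\<exists>C D D'. (C, D) \<in> m \<and> (C, D') \<in> n \<and> face_le D' D)"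

definition proj :: "('a::topological_space set \<times> 'a set) set \<Rightarrow> ('a set \<times> 'a set) set \<Rightarrow> 'a set \<times> 'a set \<Rightarrow> 'a set \<times> 'a set" where
  "proj m n p = (THE q. q \<in> n \<and> face_le (fst q) (fst p) \<and> face_le (snd q) (snd p))"

definition Sup_xi :: "('a::real_inner \<Rightarrow> 'a) set \<Rightarrow> ('a set \<times> 'a set) set \<Rightarrow> ('a set \<times> 'a set) set \<Rightarrow> ('a set \<times> 'a set) set set" where
  "Sup_xi W m' n = {m. xi_ge2 W m m' \<and> xi_ge1 W m n}"

text \<open>A point x + i y of h = h_R + i h_R is represented by the pair (x, y);
  W acts diagonally, and p(z) is the W-orbit of z.\<close>
definition pt_orbit :: "('a \<Rightarrow> 'a) set \<Rightarrow> 'a \<times> 'a \<Rightarrow> ('a \<times> 'a) set" where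
  "pt_orbit W z = {(w (fst z), w (snd z)) | w. w \<in> W}"

definition flats :: "('a::real_inner \<Rightarrow> 'a) set \<Rightarrow> 'a set set" where
  "flats W = {(\<Inter>a\<in>A. {v. a \<bullet> v = 0}) | A. A \<subseteq> roots W}"

definition generic_part :: "('a::real_inner \<Rightarrow> 'a) set \<Rightarrow> 'a set \<Rightarrow> ('a \<times> 'a) set" where
  "generic_part W L = {z. fst z \<in> L \<and> snd z \<in> L \<and>
     (\<forall>a\<in>roots W. a \<bullet> fst z = 0 \<and> a \<bullet> snd z = 0 \<longrightarrow> (\<forall>v\<in>L. a \<bullet> v = 0))}"

definition stratum :: "('a::real_inner \<Rightarrow> 'a) set \<Rightarrow> 'a set \<Rightarrow> ('a \<times> 'a) set set" where
  "stratum W L = pt_orbit W ` generic_part W L"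

text \<open>U_m = p(iC + D) for m = W(C,D) (independent of the representative).\<close>
definition cell :: "('a \<Rightarrow> 'a) set \<Rightarrow> ('a set \<times> 'a set) set \<Rightarrow> ('a \<times> 'a) set set" where
  "cell W m = {pt_orbit W (d, c) | c d. \<exists>C D. (C, D) \<in> m \<and> c \<in> C \<and> d \<in> D}"

definition same_stratum :: "('a::real_inner \<Rightarrow> 'a) set \<Rightarrow> ('a set \<times> 'a set) set \<Rightarrow> ('a set \<times> 'a set) set \<Rightarrow> bool" where
  "same_stratum W m n \<longleftrightarrow>
     (\<exists>L\<in>flats W. cell W m \<subseteq> stratum W L \<and> cell W n \<subseteq> stratum W L)"

type_synonym 'a xi = "('a set \<times> 'a set) set"

text \<open>E m is a k-subspace of the function space 'p \<Rightarrow> 'k; d1 m n = \<partial>'_{m,n} : E m \<rightarrow> E n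
  (m \<ge>' n), d2 m n = \<partial>''_{m,n} : E n \<rightarrow> E m (m \<ge>'' n).\<close>
definition mixed_Bruhat_sheaf ::
  "('a::real_inner \<Rightarrow> 'a) set \<Rightarrow> ('a xi \<Rightarrow> ('p \<Rightarrow> 'k::field) set) \<Rightarrow>
   ('a xi \<Rightarrow> 'a xi \<Rightarrow> ('p \<Rightarrow> 'k) \<Rightarrow> ('p \<Rightarrow> 'k)) \<Rightarrow>
   ('a xi \<Rightarrow> 'a xi \<Rightarrow> ('p \<Rightarrow> 'k) \<Rightarrow> ('p \<Rightarrow> 'k)) \<Rightarrow> bool" where
  "mixed_Bruhat_sheaf W E d1 d2 \<longleftrightarrow>
     \<comment> \<open>each E m is a k-vector space\<close>
     (\<forall>m\<in>Xi W. (\<lambda>_. 0) \<in> E m \<and> (\<forall>f\<in>E m. \<forall>g\<in>E m. (\<lambda>x. f x + g x) \<in> E m) \<and>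
        (\<forall>c. \<forall>f\<in>E m. (\<lambda>x. c * f x) \<in> E m)) \<and>
     \<comment> \<open>the maps are k-linear maps between the right spaces\<close>
     (\<forall>m n. xi_ge1 W m n \<longrightarrow>
        (\<forall>f\<in>E m. d1 m n f \<in> E n) \<and>
        (\<forall>f\<in>E m. \<forall>g\<in>E m. d1 m n (\<lambda>x. f x + g x) = (\<lambda>x. d1 m n f x + d1 m n g x)) \<and>
        (\<forall>c. \<forall>f\<in>E m. d1 m n (\<lambda>x. c * f x) = (\<lambda>x. c * d1 m n f x))) \<and>
     (\<forall>m n. xi_ge2 W m n \<longrightarrow>
        (\<forall>f\<in>E n. d2 m n f \<in> E m) \<and>
        (\<forall>f\<in>E n. \<forall>g\<in>E n. d2 m n (\<lambda>x. f x + g x) = (\<lambda>x. d2 m n f x + d2 m n g x)) \<and>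
        (\<forall>c. \<forall>f\<in>E n. d2 m n (\<lambda>x. c * f x) = (\<lambda>x. c * d2 m n f x))) \<and>
     \<comment> \<open>(MBS1) functoriality\<close>
     (\<forall>m\<in>Xi W. \<forall>f\<in>E m. d1 m m f = f \<and> d2 m m f = f) \<and>
     (\<forall>m n q. xi_ge1 W m n \<and> xi_ge1 W n q \<longrightarrow> (\<forall>f\<in>E m. d1 n q (d1 m n f) = d1 m q f)) \<and>
     (\<forall>m n q. xi_ge2 W m n \<and> xi_ge2 W n q \<longrightarrow> (\<forall>f\<in>E q. d2 m n (d2 n q f) = d2 m q f)) \<and>
     \<comment> \<open>(MBS2)\<close>
     (\<forall>m' n' n. xi_ge1 W m' n' \<and> xi_ge2 W n n' \<longrightarrow>
        (\<forall>f\<in>E m'. d2 n n' (d1 m' n' f) = (\<lambda>x. \<Sum>m\<in>Sup_xi W m' n. d1 m n (d2 m m' f) x))) \<and>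
     \<comment> \<open>(MBS3) anodyne maps are isomorphisms\<close>
     (\<forall>m n. xi_ge1 W m n \<and> same_stratum W m n \<longrightarrow> bij_betw (d1 m n) (E m) (E n)) \<and>
     (\<forall>m n. xi_ge2 W m n \<and> same_stratum W m n \<longrightarrow> bij_betw (d2 m n) (E n) (E m))"

definition Fun_space :: "'a xi \<Rightarrow> ('a set \<times> 'a set \<Rightarrow> 'k::zero) set" where
  "Fun_space m = {f. \<forall>p. p \<notin> m \<longrightarrow> f p = 0}"

definition push :: "'a::topological_space xi \<Rightarrow> 'a xi \<Rightarrow> ('a set \<times> 'a set \<Rightarrow> 'k::comm_monoid_add) \<Rightarrow> ('a set \<times> 'a set \<Rightarrow> 'k)" where
  "push m n f = (\<lambda>q. if q \<in> n then (\<Sum>p\<in>{p\<in>m. proj m n p = q}. f p) else 0)"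

definition pull :: "'a::topological_space xi \<Rightarrow> 'a xi \<Rightarrow> ('a set \<times> 'a set \<Rightarrow> 'k::zero) \<Rightarrow> ('a set \<times> 'a set \<Rightarrow> 'k)" where
  "pull m n f = (\<lambda>p. if p \<in> m then f (proj m n p) else 0)"

end

theory Submission imports Defs begin

lemma refl_vec_linear: "linear (refl_vec a)"
  unfolding refl_vec_def by (intro linearI) (auto simp: algebra_simps inner_add_left add_divide_distrib scaleR_add_left[symmetric] divide_simps)

lemma refl_vec_inner_same: "a \<noteq> 0 \<Longrightarrow> refl_vec a v \<bullet> refl_vec a w = v \<bullet> w"
  unfolding refl_vec_def by (simp add: algebra_simps inner_commute divide_simps power2_eq_square) 

lemma refl_vec_orth: "a \<noteq> 0 \<Longrightarrow> orthogonal_transformation (refl_vec a)"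
  by (simp add: orthogonal_transformation_def refl_vec_linear refl_vec_inner_same)

lemma refl_vec_self: "a \<noteq> 0 \<Longrightarrow> refl_vec a a = - a"
  unfolding refl_vec_def by (simp add: algebra_simps scaleR_2)

lemma refl_vec_fix: "a \<bullet> v = 0 \<Longrightarrow> refl_vec a v = v"
  unfolding refl_vec_def by (simp add: inner_commute)

lemma refl_vec_invol: "a \<noteq> 0 \<Longrightarrow> refl_vec a (refl_vec a v) = v"
  unfolding refl_vec_def by (simp add: algebra_simps inner_commute divide_simps)

lemma refl_vec_scale: "c \<noteq> 0 \<Longrightarrow> refl_vec (c *\<^sub>R a) = refl_vec a"
  unfolding refl_vec_def by (rule ext) (simp add: divide_simps)

lemma refl_vec_unit: "norm a = 1 \<Longrightarrow> refl_vec a v = v - (2 * (v \<bullet> a)) *\<^sub>R a"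
  unfolding refl_vec_def by (simp add: norm_eq_1)

lemma unit_refl_eq:
  assumes "norm a = 1" "norm b = 1" "refl_vec a = refl_vec b"
  shows "b = a \<or> b = - a"
proof -
  have a0: "a \<noteq> 0" using assms by auto
  have "refl_vec b a = - a" using assms(3) refl_vec_self[OF a0] by metis
  hence "a - (2 * (a \<bullet> b)) *\<^sub>R b = - a" using refl_vec_unit[OF assms(2)] by simp
  hence "2 *\<^sub>R a = (2 * (a \<bullet> b)) *\<^sub>R b" by (simp add: algebra_simps scaleR_2)
  hence aeq: "a = (a \<bullet> b) *\<^sub>R b" by (metis (no_types, lifting) mult.commute scaleR_scaleR zero_neq_numeral scaleR_cancel_left mult_2)
  hence "norm a = \<bar>a \<bullet> b\<bar>" using assms(2) by (metis mult.right_neutral norm_scaleR)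
  hence "\<bar>a \<bullet> b\<bar> = 1" using assms(1) by simp
  hence "a \<bullet> b = 1 \<or> a \<bullet> b = -1" by auto
  thus ?thesis using aeq by auto
qed

lemma sgn_eq_cases: fixes u v :: real assumes "sgn u = sgn v"
  shows "v > 0 \<Longrightarrow> u > 0" "v = 0 \<Longrightarrow> u = 0" "v < 0 \<Longrightarrow> u < 0"
  using assms by (auto simp: sgn_real_def split: if_splits)

lemma small_pert:
  fixes f g :: "'b \<Rightarrow> real"
  assumes "finite G"
  shows "\<exists>e>0. \<forall>y\<in>G. (f y > 0 \<longrightarrow> f y + e * g y > 0) \<and> (f y < 0 \<longrightarrow> f y + e * g y < 0)"
proof -
  have "\<forall>\<^sub>F e in at_right (0::real). \<forall>y\<in>G. (f y > 0 \<longrightarrow> f y + e * g y > 0) \<and> (f y < 0 \<longrightarrow> f y + e * g y < 0)"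
  proof (rule eventually_ball_finite[OF assms], rule ballI)
    fix y
    have t: "((\<lambda>e. f y + e * g y) \<longlongrightarrow> f y + 0 * g y) (at_right 0)"
      by (intro tendsto_intros)
    hence t': "((\<lambda>e. f y + e * g y) \<longlongrightarrow> f y) (at_right 0)" by simp
    show "\<forall>\<^sub>F e in at_right 0. (f y > 0 \<longrightarrow> f y + e * g y > 0) \<and> (f y < 0 \<longrightarrow> f y + e * g y < 0)"
    proof (cases "f y > 0")
      case True
      have "\<forall>\<^sub>F e in at_right 0. 0 < f y + e * g y" using order_tendstoD(1)[OF t' True] .
      thus ?thesis by eventually_elim (use True in auto)
    next
      case False
      show ?thesis
      proof (cases "f y < 0")
        case True
        have "\<forall>\<^sub>F e in at_right 0. f y + e * g y < 0" using order_tendstoD(2)[OF t' True] .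
        thus ?thesis by eventually_elim (use True in auto)
      qed (use False in auto)
    qed
  qed
  moreover have "\<forall>\<^sub>F e in at_right (0::real). 0 < e" by (rule eventually_at_right_less)
  ultimately have "\<forall>\<^sub>F e in at_right (0::real). 0 < e \<and> (\<forall>y\<in>G. (f y > 0 \<longrightarrow> f y + e * g y > 0) \<and> (f y < 0 \<longrightarrow> f y + e * g y < 0))"
    by (rule eventually_conj[rotated])
  from eventually_happens'[OF _ this] show ?thesis by auto
qed

lemma unit_inner_lt1:
  fixes a b :: "'a::real_inner"
  assumes "norm a = 1" "norm b = 1" "b \<noteq> a" "b \<noteq> - a"
  shows "(a \<bullet> b)^2 < 1"
proof -
  let ?c = "a \<bullet> b"
  have "(b - ?c *\<^sub>R a) \<bullet> (b - ?c *\<^sub>R a) = b \<bullet> b - 2 * ?c * (a \<bullet> b) + ?c * ?c * (a \<bullet> a)"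
    by (simp add: algebra_simps inner_commute)
  also have "\<dots> = 1 - ?c^2" using assms(1,2) by (simp add: norm_eq_1 power2_eq_square)
  finally have e: "(b - ?c *\<^sub>R a) \<bullet> (b - ?c *\<^sub>R a) = 1 - ?c^2" .
  have "?c^2 \<le> 1" using e by (metis diff_ge_0_iff_ge inner_ge_zero)
  moreover have "?c^2 \<noteq> 1"
  proof
    assume h: "?c^2 = 1"
    hence "b = ?c *\<^sub>R a" using e by simp
    moreover have "?c = 1 \<or> ?c = -1" using h by (metis power2_eq_1_iff)
    ultimately show False using assms(3,4) by auto
  qed
  ultimately show ?thesis by simp
qed

fun wd :: "'a::real_inner list \<Rightarrow> 'a \<Rightarrow> 'a" where
  "wd [] = id"
| "wd (a # l) = refl_vec a \<circ> wd l"

lemma wd_append: "wd (l1 @ l2) = wd l1 \<circ> wd l2"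
  by (induction l1) auto

lemma wd_rev_inv: "\<forall>a\<in>set l. a \<noteq> 0 \<Longrightarrow> wd (rev l) (wd l x) = x"
proof (induction l arbitrary: x)
  case (Cons a l)
  have "wd (rev (a # l)) (wd (a # l) x) = wd (rev l) (refl_vec a (refl_vec a (wd l x)))"
    by (simp add: wd_append)
  also have "\<dots> = wd (rev l) (wd l x)" using Cons.prems refl_vec_invol[of a "wd l x"] by simp
  finally show ?case using Cons by simp
qed simp

lemma wd_inv_rev: "\<forall>a\<in>set l. a \<noteq> 0 \<Longrightarrow> wd l (wd (rev l) x) = x"
  using wd_rev_inv[of "rev l" x] by simp

locale frg =
  fixes W :: "('a::euclidean_space \<Rightarrow> 'a) set"
  assumes frg: "finite_reflection_group W"
begin

lemma finW: "finite W" and idW: "id \<in> W" and compW: "v \<in> W \<Longrightarrow> w \<in> W \<Longrightarrow> v \<circ> w \<in> W"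
  and orthW: "w \<in> W \<Longrightarrow> orthogonal_transformation w"
  using frg unfolding finite_reflection_group_def by auto

lemma genW: "w \<in> W \<Longrightarrow> \<exists>rs. set rs \<subseteq> reflections W \<and> w = foldr (\<circ>) rs id"
  using frg unfolding finite_reflection_group_def by auto

lemma linW: "w \<in> W \<Longrightarrow> linear w"
  using orthW orthogonal_transformation_def by blast

lemma innerW: "w \<in> W \<Longrightarrow> w x \<bullet> w y = x \<bullet> y"
  using orthW orthogonal_transformation_def by blast

lemma normW: "w \<in> W \<Longrightarrow> norm (w x) = norm x"
  using orthW orthogonal_transformation by blast

lemma injW: "w \<in> W \<Longrightarrow> inj w"
  using orthW orthogonal_transformation_inj by blast

lemma W0: "w \<in> W \<Longrightarrow> w 0 = 0"
  using linW linear_0 by blast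

lemma exinvW:
  assumes "w \<in> W" shows "\<exists>v\<in>W. w \<circ> v = id \<and> v \<circ> w = id"
proof -
  have inj: "inj w" using injW assms by blast
  have "inj_on (\<lambda>v. w \<circ> v) W"
  proof (rule inj_onI)
    fix v1 v2 assume "w \<circ> v1 = w \<circ> v2"
    hence "w (v1 x) = w (v2 x)" for x by (metis comp_apply)
    thus "v1 = v2" using inj by (simp add: inj_eq fun_eq_iff)
  qed
  moreover have "(\<lambda>v. w \<circ> v) ` W \<subseteq> W" using compW assms by blast
  ultimately have "(\<lambda>v. w \<circ> v) ` W = W" using endo_inj_surj finW by blast
  then obtain v where v: "v \<in> W" "w \<circ> v = id" using idW by (metis (no_types, lifting) imageE)
  have "v \<circ> w = id"
  proof
    fix x have "w (v (w x)) = w x" using v(2) by (metis comp_apply id_apply)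
    thus "(v \<circ> w) x = id x" using inj by (simp add: inj_eq)
  qed
  thus ?thesis using v by blast
qed

definition ginv :: "('a \<Rightarrow> 'a) \<Rightarrow> ('a \<Rightarrow> 'a)" where
  "ginv w = (SOME v. v \<in> W \<and> w \<circ> v = id \<and> v \<circ> w = id)"

lemma ginv: assumes "w \<in> W" shows "ginv w \<in> W" "w \<circ> ginv w = id" "ginv w \<circ> w = id"
  using someI_ex[OF exinvW[OF assms, unfolded Bex_def]] unfolding ginv_def by auto

lemma ginv_app: "w \<in> W \<Longrightarrow> w (ginv w x) = x" "w \<in> W \<Longrightarrow> ginv w (w x) = x"
  using ginv by (metis comp_apply id_apply)+

lemma inner_ginv: "w \<in> W \<Longrightarrow> w x \<bullet> y = x \<bullet> ginv w y"
  by (metis ginv_app(1) innerW)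

lemma conj_refl:
  assumes "w \<in> W" "a \<noteq> 0"
  shows "w \<circ> refl_vec a \<circ> ginv w = refl_vec (w a)"
proof
  fix x
  have l: "linear w" using linW assms by blast
  have "(w \<circ> refl_vec a \<circ> ginv w) x = w (ginv w x) - (2 * (ginv w x \<bullet> a) / (a \<bullet> a)) *\<^sub>R w a"
    unfolding refl_vec_def using l by (simp add: linear_diff linear_scale)
  also have "\<dots> = refl_vec (w a) x" unfolding refl_vec_def
    using assms by (simp add: ginv_app innerW) (metis ginv_app(1) innerW inner_commute)
  finally show "(w \<circ> refl_vec a \<circ> ginv w) x = refl_vec (w a) x" .
qed

lemma roots_W: "a \<in> roots W \<Longrightarrow> w \<in> W \<Longrightarrow> w a \<in> roots W"
proof -
  assume a: "a \<in> roots W" and w: "w \<in> W"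
  hence a0: "a \<noteq> 0" "refl_vec a \<in> W" unfolding roots_def by auto
  have "w a \<noteq> 0" using a0 w by (metis normW norm_eq_zero)
  moreover have "refl_vec (w a) \<in> W"
    using conj_refl[OF w a0(1)] compW a0(2) w ginv(1) by metis
  ultimately show ?thesis unfolding roots_def by auto
qed

definition Phi :: "'a set" where "Phi = {a \<in> roots W. norm a = 1}"

lemma Phi_nz: "a \<in> Phi \<Longrightarrow> a \<noteq> 0" unfolding Phi_def by auto
lemma Phi_norm: "a \<in> Phi \<Longrightarrow> norm a = 1" unfolding Phi_def by auto
lemma Phi_roots: "a \<in> Phi \<Longrightarrow> a \<in> roots W" unfolding Phi_def by auto
lemma Phi_W: "a \<in> Phi \<Longrightarrow> w \<in> W \<Longrightarrow> w a \<in> Phi"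
  unfolding Phi_def using roots_W normW by auto
lemma Phi_neg: "a \<in> Phi \<Longrightarrow> - a \<in> Phi"
  unfolding Phi_def roots_def using refl_vec_scale[of "-1" a] by auto
lemma Phi_refl: "a \<in> Phi \<Longrightarrow> refl_vec a \<in> W"
  unfolding Phi_def roots_def by auto

lemma roots_unit:
  assumes "a \<in> roots W" shows "(1 / norm a) *\<^sub>R a \<in> Phi" "a = norm a *\<^sub>R ((1 / norm a) *\<^sub>R a)"
proof -
  have a0: "a \<noteq> 0" "refl_vec a \<in> W" using assms unfolding roots_def by auto
  thus "(1 / norm a) *\<^sub>R a \<in> Phi" unfolding Phi_def roots_def using refl_vec_scale[of "1 / norm a" a] by auto
  show "a = norm a *\<^sub>R ((1 / norm a) *\<^sub>R a)" using a0 by simp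
qed

lemma finite_Phi: "finite Phi"
proof -
  have "Phi \<subseteq> (\<Union>s\<in>W. {a. norm a = 1 \<and> refl_vec a = s})"
    unfolding Phi_def roots_def by auto
  moreover have "finite {a. norm a = 1 \<and> refl_vec a = s}" for s
  proof (cases "\<exists>a0. norm a0 = 1 \<and> refl_vec a0 = s")
    case True
    then obtain a0 where a0: "norm a0 = 1" "refl_vec a0 = s" by blast
    have "{a. norm a = 1 \<and> refl_vec a = s} \<subseteq> {a0, - a0}"
      using unit_refl_eq a0 by fastforce
    thus ?thesis by (rule finite_subset) simp
  next
    case False
    hence "{a. norm a = 1 \<and> refl_vec a = s} = {}" by auto
    thus ?thesis by (metis finite.emptyI)
  qed
  hence "finite (\<Union>s\<in>W. {a. norm a = 1 \<and> refl_vec a = s})" using finW by (intro finite_UN_I) auto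
  ultimately show ?thesis by (rule finite_subset)
qed

lemma sgn_root_unit:
  assumes "a \<in> roots W" shows "sgn (a \<bullet> y) = sgn (((1 / norm a) *\<^sub>R a) \<bullet> y)"
proof -
  have "norm a > 0" using assms unfolding roots_def by auto
  thus ?thesis by (simp add: sgn_mult)
qed

lemma arr_face_Phi: "arr_face W x = {y. \<forall>a\<in>Phi. sgn (a \<bullet> y) = sgn (a \<bullet> x)}"
proof
  show "arr_face W x \<subseteq> {y. \<forall>a\<in>Phi. sgn (a \<bullet> y) = sgn (a \<bullet> x)}"
    unfolding arr_face_def using Phi_roots by auto
  show "{y. \<forall>a\<in>Phi. sgn (a \<bullet> y) = sgn (a \<bullet> x)} \<subseteq> arr_face W x"
  proof (clarsimp simp: arr_face_def)
    fix y a assume h: "\<forall>a\<in>Phi. sgn (a \<bullet> y) = sgn (a \<bullet> x)" "a \<in> roots W"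
    have "sgn (a \<bullet> y) = sgn (((1 / norm a) *\<^sub>R a) \<bullet> y)" using sgn_root_unit h(2) by blast
    also have "\<dots> = sgn (((1 / norm a) *\<^sub>R a) \<bullet> x)" using h roots_unit(1) by blast
    also have "\<dots> = sgn (a \<bullet> x)" using sgn_root_unit h(2) by metis
    finally show "sgn (a \<bullet> y) = sgn (a \<bullet> x)" .
  qed
qed

lemma face_self: "x \<in> arr_face W x"
  unfolding arr_face_def by auto

lemma face_eq: "y \<in> arr_face W x \<Longrightarrow> arr_face W y = arr_face W x"
  unfolding arr_face_def by auto

lemma face_W_mem: assumes "w \<in> W" "y \<in> arr_face W x" shows "w y \<in> arr_face W (w x)"
  unfolding arr_face_def
proof safe
  fix a assume "a \<in> roots W"
  hence "ginv w a \<in> roots W" using roots_W ginv assms by blast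
  hence e: "sgn (ginv w a \<bullet> y) = sgn (ginv w a \<bullet> x)" using assms(2) unfolding arr_face_def by blast
  have e1: "a \<bullet> w y = ginv w a \<bullet> y" "a \<bullet> w x = ginv w a \<bullet> x"
    using inner_ginv[OF assms(1), of y a] inner_ginv[OF assms(1), of x a] by (simp_all add: inner_commute)
  show "sgn (a \<bullet> w y) = sgn (a \<bullet> w x)" using e e1 by simp
qed

lemma face_W: assumes "w \<in> W" shows "w ` arr_face W x = arr_face W (w x)"
proof
  show "w ` arr_face W x \<subseteq> arr_face W (w x)" using face_W_mem assms by blast
  show "arr_face W (w x) \<subseteq> w ` arr_face W x"
  proof
    fix z assume "z \<in> arr_face W (w x)"
    hence "ginv w z \<in> arr_face W (ginv w (w x))" using face_W_mem ginv(1) assms by blast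
    hence "ginv w z \<in> arr_face W x" using ginv_app assms by simp
    thus "z \<in> w ` arr_face W x" using ginv_app(1)[OF assms] by (metis image_eqI)
  qed
qed

lemma finite_faces: "finite (arr_faces W)"
proof -
  let ?G = "Phi \<rightarrow>\<^sub>E ({-1, 0, 1} :: real set)"
  have "arr_faces W \<subseteq> (\<lambda>g. {y. \<forall>a\<in>Phi. sgn (a \<bullet> y) = g a}) ` ?G"
  proof
    fix F assume "F \<in> arr_faces W"
    then obtain x where F: "F = arr_face W x" unfolding arr_faces_def by auto
    let ?g = "restrict (\<lambda>a. sgn (a \<bullet> x)) Phi"
    have "?g \<in> ?G" by (auto simp: sgn_real_def)
    moreover have "F = {y. \<forall>a\<in>Phi. sgn (a \<bullet> y) = ?g a}" using F arr_face_Phi by auto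
    ultimately show "F \<in> (\<lambda>g. {y. \<forall>a\<in>Phi. sgn (a \<bullet> y) = g a}) ` ?G" by blast
  qed
  moreover have "finite ?G" using finite_Phi by (intro finite_PiE) auto
  ultimately show ?thesis using finite_subset by blast
qed

lemma face_sgn: "v \<in> arr_face W x \<Longrightarrow> a \<in> roots W \<Longrightarrow> sgn (a \<bullet> v) = sgn (a \<bullet> x)"
  unfolding arr_face_def by blast

lemma closure_face_sign:
  assumes "y \<in> closure (arr_face W x)" "a \<in> roots W"
  shows "a \<bullet> x > 0 \<Longrightarrow> a \<bullet> y \<ge> 0" "a \<bullet> x = 0 \<Longrightarrow> a \<bullet> y = 0" "a \<bullet> x < 0 \<Longrightarrow> a \<bullet> y \<le> 0"
proof -
  assume h: "a \<bullet> x > 0"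
  have "arr_face W x \<subseteq> {v. a \<bullet> v \<ge> 0}"
  proof
    fix v assume "v \<in> arr_face W x"
    from sgn_eq_cases(1)[OF face_sgn[OF this assms(2)] h] show "v \<in> {v. a \<bullet> v \<ge> 0}" by simp
  qed
  hence "closure (arr_face W x) \<subseteq> {v. a \<bullet> v \<ge> 0}" by (intro closure_minimal) (simp_all add: closed_halfspace_ge)
  thus "a \<bullet> y \<ge> 0" using assms by auto
next
  assume h: "a \<bullet> x = 0"
  have "arr_face W x \<subseteq> {v. a \<bullet> v = 0}"
  proof
    fix v assume "v \<in> arr_face W x"
    from sgn_eq_cases(2)[OF face_sgn[OF this assms(2)] h] show "v \<in> {v. a \<bullet> v = 0}" by simp
  qed
  hence "closure (arr_face W x) \<subseteq> {v. a \<bullet> v = 0}" by (intro closure_minimal) (simp_all add: closed_hyperplane)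
  thus "a \<bullet> y = 0" using assms by auto
next
  assume h: "a \<bullet> x < 0"
  have "arr_face W x \<subseteq> {v. a \<bullet> v \<le> 0}"
  proof
    fix v assume "v \<in> arr_face W x"
    from sgn_eq_cases(3)[OF face_sgn[OF this assms(2)] h] show "v \<in> {v. a \<bullet> v \<le> 0}" by simp
  qed
  hence "closure (arr_face W x) \<subseteq> {v. a \<bullet> v \<le> 0}" by (intro closure_minimal) (simp_all add: closed_halfspace_le)
  thus "a \<bullet> y \<le> 0" using assms by auto
qed

lemma closure_W: "w \<in> W \<Longrightarrow> w ` closure S = closure (w ` S)"
  using closure_injective_linear_image linW injW by blast

lemma wd_W: "set l \<subseteq> Phi \<Longrightarrow> wd l \<in> W"
proof (induction l)
  case Nil show ?case using idW by (simp only: wd.simps)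
next
  case (Cons a l)
  hence "refl_vec a \<in> W" "wd l \<in> W" using Phi_refl by auto
  hence "refl_vec a \<circ> wd l \<in> W" using compW by blast
  thus ?case by (simp only: wd.simps)
qed

lemma ginv_unique: assumes "w \<in> W" "\<And>x. w (v x) = x" shows "ginv w = v"
proof
  fix x show "ginv w x = v x" using assms ginv_app(2)[OF assms(1), of "v x"] by simp
qed

lemma ginv_wd: "set l \<subseteq> Phi \<Longrightarrow> ginv (wd l) = wd (rev l)"
  by (rule ginv_unique[OF wd_W]) (auto intro!: wd_inv_rev dest: Phi_nz)

lemma inner_W_left: "w \<in> W \<Longrightarrow> a \<bullet> w y = ginv w a \<bullet> y"
  using inner_ginv[of w y a] by (simp add: inner_commute)

end

locale chamber = frg W for W :: "('a::euclidean_space \<Rightarrow> 'a) set" +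
  fixes c0 :: 'a
  assumes gen: "\<forall>a\<in>Phi. a \<bullet> c0 \<noteq> 0"
begin

definition Pos :: "'a set" where "Pos = {a\<in>Phi. a \<bullet> c0 > 0}"
definition conD :: "'a set \<Rightarrow> 'a set" where "conD D = {v. \<forall>a\<in>D. a \<bullet> v \<ge> 0}"
definition Kc :: "'a set" where "Kc = conD Pos"

lemma Pos_Phi: "a \<in> Pos \<Longrightarrow> a \<in> Phi" unfolding Pos_def by auto
lemma Pos_c0: "a \<in> Pos \<Longrightarrow> a \<bullet> c0 > 0" unfolding Pos_def by auto
lemma finite_Pos: "finite Pos" unfolding Pos_def using finite_Phi by auto

lemma Phi_cases: "a \<in> Phi \<Longrightarrow> a \<notin> Pos \<Longrightarrow> a \<bullet> c0 < 0 \<and> - a \<in> Pos"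
  using gen Phi_neg unfolding Pos_def by force

lemma neg_notPos: "a \<in> Pos \<Longrightarrow> - a \<notin> Pos"
  unfolding Pos_def by auto

lemma Kc_pos: "v \<in> Kc \<Longrightarrow> a \<in> Pos \<Longrightarrow> a \<bullet> v \<ge> 0"
  unfolding Kc_def conD_def by auto

lemma ex_Simp: "\<exists>D. D \<subseteq> Pos \<and> conD D = Kc \<and> (\<forall>a\<in>D. conD (D - {a}) \<noteq> Kc)"
proof -
  let ?P = "\<lambda>D. D \<subseteq> Pos \<and> conD D = Kc"
  have "?P Pos" unfolding Kc_def by simp
  obtain D where D1: "D \<subseteq> Pos" "conD D = Kc" and D2: "\<forall>y. ?P y \<longrightarrow> card D \<le> card y"
    using ex_has_least_nat[of ?P Pos card, OF \<open>?P Pos\<close>] apply (elim exE conjE) apply (rule that) apply assumption+ done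
  have D: "?P D" "\<forall>y. ?P y \<longrightarrow> card D \<le> card y" using D1 D2 by blast+
  have fD: "finite D" using D(1) finite_Pos finite_subset by blast
  have "conD (D - {a}) \<noteq> Kc" if a: "a \<in> D" for a
  proof
    assume "conD (D - {a}) = Kc"
    moreover have "D - {a} \<subseteq> Pos" using D(1) by blast
    ultimately have "?P (D - {a})" by blast
    hence "card D \<le> card (D - {a})" using D(2) by blast
    moreover have "card (D - {a}) < card D" using card_Diff1_less[OF fD a] .
    ultimately show False by simp
  qed
  thus ?thesis using D by blast
qed

definition Simp :: "'a set" where
  "Simp = (SOME D. D \<subseteq> Pos \<and> conD D = Kc \<and> (\<forall>a\<in>D. conD (D - {a}) \<noteq> Kc))"

lemma Simp_all: "Simp \<subseteq> Pos \<and> conD Simp = Kc \<and> (\<forall>a\<in>Simp. conD (Simp - {a}) \<noteq> Kc)"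
  unfolding Simp_def by (rule someI_ex[OF ex_Simp])

lemma Simp: "Simp \<subseteq> Pos" "conD Simp = Kc" "\<And>a. a \<in> Simp \<Longrightarrow> conD (Simp - {a}) \<noteq> Kc"
  using Simp_all by auto

lemma Simp_Pos: "a \<in> Simp \<Longrightarrow> a \<in> Pos" using Simp(1) by blast
lemma Simp_Phi: "a \<in> Simp \<Longrightarrow> a \<in> Phi" using Simp_Pos Pos_Phi by blast

lemma Kc_Simp: "v \<in> Kc \<longleftrightarrow> (\<forall>a\<in>Simp. a \<bullet> v \<ge> 0)"
  using Simp(2) unfolding conD_def by blast

lemma simple_perm:
  assumes al: "al \<in> Simp" and b: "b \<in> Pos" and ba: "b \<noteq> al"
  shows "refl_vec al b \<in> Pos"
proof -
  have alPos: "al \<in> Pos" using al Simp_Pos by blast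
  have alPhi: "al \<in> Phi" using alPos Pos_Phi by blast
  have bPhi: "b \<in> Phi" using b Pos_Phi by blast
  have "Kc \<subseteq> conD (Simp - {al})" using Simp(2) unfolding conD_def by auto
  then obtain v where v: "v \<in> conD (Simp - {al})" "v \<notin> Kc" using Simp(3)[OF al] by blast
  have vg: "\<forall>g\<in>Simp - {al}. g \<bullet> v \<ge> 0" using v(1) unfolding conD_def by blast
  have av: "al \<bullet> v < 0"
  proof (rule ccontr)
    assume "\<not> al \<bullet> v < 0"
    hence "\<forall>g\<in>Simp. g \<bullet> v \<ge> 0" using vg by force
    thus False using v(2) Kc_Simp by blast
  qed
  have ac: "al \<bullet> c0 > 0" using alPos Pos_c0 by blast
  define t where "t = (al \<bullet> c0) / (al \<bullet> c0 - al \<bullet> v)"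
  have t0: "0 < t" "t < 1" using av ac unfolding t_def by (auto simp: divide_simps)
  define p where "p = (1 - t) *\<^sub>R c0 + t *\<^sub>R v"
  have ap: "al \<bullet> p = 0" unfolding p_def t_def using av ac
    by (simp add: inner_add_right divide_simps algebra_simps)
  have gp: "g \<bullet> p > 0" if g: "g \<in> Simp - {al}" for g
  proof -
    have "g \<bullet> c0 > 0" using g Simp_Pos Pos_c0 by blast
    moreover have "g \<bullet> v \<ge> 0" using vg g by blast
    ultimately have "(1 - t) * (g \<bullet> c0) > 0" "t * (g \<bullet> v) \<ge> 0" using t0 by auto
    thus ?thesis unfolding p_def by (simp add: inner_add_right)
  qed
  have pK: "p \<in> Kc" unfolding Kc_Simp using gp ap by (metis DiffI empty_iff insert_iff order_less_imp_le order_refl)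
  have bp: "b \<bullet> p > 0"
  proof (rule ccontr)
    assume "\<not> b \<bullet> p > 0"
    hence bp0: "b \<bullet> p = 0" using Kc_pos[OF pK b] by simp
    have bna: "b \<noteq> - al" using neg_notPos alPos b by blast
    define u where "u = (b \<bullet> al) *\<^sub>R al - b"
    have au: "al \<bullet> u = 0" unfolding u_def using Phi_norm[OF alPhi]
      by (simp add: inner_diff_right norm_eq_1 inner_commute)
    have "(al \<bullet> b)^2 < 1" using unit_inner_lt1[OF Phi_norm[OF alPhi] Phi_norm[OF bPhi] ba bna] .
    hence bu: "b \<bullet> u < 0" unfolding u_def using Phi_norm[OF bPhi]
      by (simp add: inner_diff_right norm_eq_1 inner_commute power2_eq_square)
    obtain e where e: "e > 0" "\<forall>g\<in>Simp - {al}. (g \<bullet> p > 0 \<longrightarrow> g \<bullet> p + e * (g \<bullet> u) > 0) \<and> (g \<bullet> p < 0 \<longrightarrow> g \<bullet> p + e * (g \<bullet> u) < 0)"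
      using small_pert[of "Simp - {al}" "\<lambda>g. g \<bullet> p" "\<lambda>g. g \<bullet> u"] finite_Pos Simp(1)
      by (meson finite_Diff finite_subset)
    have "p + e *\<^sub>R u \<in> Kc" unfolding Kc_Simp
    proof
      fix g assume g: "g \<in> Simp"
      show "g \<bullet> (p + e *\<^sub>R u) \<ge> 0"
      proof (cases "g = al")
        case True thus ?thesis using ap au by (simp add: inner_add_right)
      next
        case False
        hence "g \<bullet> p + e * (g \<bullet> u) > 0" using e(2) gp g by blast
        thus ?thesis by (simp add: inner_add_right)
      qed
    qed
    hence "b \<bullet> (p + e *\<^sub>R u) \<ge> 0" using Kc_pos b by blast
    moreover have "b \<bullet> (p + e *\<^sub>R u) < 0" using bp0 bu e(1)
      by (simp add: inner_add_right mult_pos_neg)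
    ultimately show False by simp
  qed
  have rW: "refl_vec al \<in> W" using Phi_refl alPhi by blast
  have rPhi: "refl_vec al b \<in> Phi" using Phi_W[OF bPhi rW] .
  have "refl_vec al p = p" using refl_vec_fix ap by blast
  hence "refl_vec al b \<bullet> p = b \<bullet> p" using refl_vec_inner_same[OF Phi_nz[OF alPhi], of b p] by simp
  hence rp: "refl_vec al b \<bullet> p > 0" using bp by simp
  show ?thesis
  proof (rule ccontr)
    assume "refl_vec al b \<notin> Pos"
    hence "- refl_vec al b \<in> Pos" using Phi_cases rPhi by blast
    hence "(- refl_vec al b) \<bullet> p \<ge> 0" using Kc_pos pK by blast
    thus False using rp by simp
  qed
qed

lemma exists_simple_neg:
  assumes w: "w \<in> W" and b: "b \<in> Pos" and wb: "w b \<bullet> c0 < 0"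
  shows "\<exists>al\<in>Simp. w al \<bullet> c0 < 0"
proof (rule ccontr)
  assume "\<not> (\<exists>al\<in>Simp. w al \<bullet> c0 < 0)"
  hence "\<forall>al\<in>Simp. al \<bullet> ginv w c0 \<ge> 0" using inner_ginv[OF w] by (metis not_less)
  hence "ginv w c0 \<in> Kc" using Kc_Simp by blast
  hence "b \<bullet> ginv w c0 \<ge> 0" using Kc_pos b by blast
  thus False using wb inner_ginv[OF w, of b c0] by simp
qed

lemma exists_pos_inner:
  assumes b: "b \<in> Pos" shows "\<exists>al\<in>Simp. b \<bullet> al > 0"
proof (rule ccontr)
  assume "\<not> (\<exists>al\<in>Simp. b \<bullet> al > 0)"
  hence "\<forall>al\<in>Simp. al \<bullet> (- b) \<ge> 0" by (simp add: inner_commute not_less)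
  hence "- b \<in> Kc" using Kc_Simp by blast
  hence "b \<bullet> (- b) \<ge> 0" using Kc_pos b by blast
  moreover have "b \<noteq> 0" using b Pos_Phi Phi_nz by blast
  ultimately show False by (simp add: inner_gt_zero_iff[symmetric] not_le[symmetric] del: inner_gt_zero_iff)
qed

definition N :: "('a \<Rightarrow> 'a) \<Rightarrow> 'a set" where "N w = {b\<in>Pos. w b \<bullet> c0 < 0}"
definition nn :: "('a \<Rightarrow> 'a) \<Rightarrow> nat" where "nn w = card (N w)"

lemma finite_N: "finite (N w)" unfolding N_def using finite_Pos by auto

lemma wneg: "w \<in> W \<Longrightarrow> w (- x) = - w x"
  using linW linear_neg by blast

lemma n_dec:
  assumes w: "w \<in> W" and al: "al \<in> Simp" and wa: "w al \<bullet> c0 < 0"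
  shows "nn (w \<circ> refl_vec al) < nn w"
proof -
  have alPhi: "al \<in> Phi" using al Simp_Phi by blast
  have a0: "al \<noteq> 0" using Phi_nz alPhi by blast
  have "N (w \<circ> refl_vec al) \<subseteq> refl_vec al ` (N w - {al})"
  proof
    fix b assume "b \<in> N (w \<circ> refl_vec al)"
    hence b: "b \<in> Pos" "w (refl_vec al b) \<bullet> c0 < 0" unfolding N_def by auto
    have "b \<noteq> al"
    proof
      assume "b = al"
      hence "w (refl_vec al b) = - w al" using refl_vec_self[OF a0] wneg[OF w] by simp
      thus False using b(2) wa by simp
    qed
    hence rb: "refl_vec al b \<in> Pos" using simple_perm al b(1) by blast
    have "refl_vec al b \<noteq> al"
    proof
      assume "refl_vec al b = al"
      hence "b = - al" using refl_vec_invol[OF a0, of b] refl_vec_self[OF a0] by metis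
      thus False using b(1) neg_notPos al Simp_Pos by blast
    qed
    hence "refl_vec al b \<in> N w - {al}" using rb b(2) unfolding N_def by auto
    moreover have "b = refl_vec al (refl_vec al b)" using refl_vec_invol[OF a0] by simp
    ultimately show "b \<in> refl_vec al ` (N w - {al})" by blast
  qed
  hence "nn (w \<circ> refl_vec al) \<le> card (refl_vec al ` (N w - {al}))"
    unfolding nn_def using finite_N by (meson card_mono finite_Diff finite_imageI)
  also have "\<dots> \<le> card (N w - {al})" using card_image_le finite_N by blast
  also have "\<dots> < nn w" unfolding nn_def
  proof (rule card_Diff1_less[OF finite_N])
    show "al \<in> N w" unfolding N_def using wa al Simp_Pos by blast
  qed
  finally show ?thesis .
qed

lemma n_pos:
  assumes w: "w \<in> W" and b: "b \<in> Pos" and wb: "w b \<bullet> c0 > 0"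
  shows "nn (w \<circ> refl_vec b) > 0"
proof -
  have b0: "b \<noteq> 0" using b Pos_Phi Phi_nz by blast
  have "w (refl_vec b b) = - w b" using refl_vec_self[OF b0] wneg[OF w] by simp
  hence "b \<in> N (w \<circ> refl_vec b)" unfolding N_def using b wb by simp
  thus ?thesis unfolding nn_def using finite_N by (metis card_gt_0_iff empty_iff)
qed

lemma conj_root:
  assumes "b \<in> Pos" shows "\<exists>l al. set l \<subseteq> Simp \<and> al \<in> Simp \<and> b = wd l al"
  using assms
proof (induction "card {x\<in>Pos. x \<bullet> c0 < b \<bullet> c0}" arbitrary: b rule: less_induct)
  case less
  show ?case
  proof (cases "b \<in> Simp")
    case True
    hence "set [] \<subseteq> Simp \<and> b \<in> Simp \<and> b = wd [] b" by simp
    thus ?thesis by blast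
  next
    case False
    obtain al where al: "al \<in> Simp" "b \<bullet> al > 0" using exists_pos_inner less.prems by blast
    have alPhi: "al \<in> Phi" using al Simp_Phi by blast
    have a0: "al \<noteq> 0" using alPhi Phi_nz by blast
    have ba: "b \<noteq> al" using False al by blast
    define b' where "b' = refl_vec al b"
    have b'P: "b' \<in> Pos" unfolding b'_def using simple_perm al(1) less.prems ba by blast
    have "b' \<bullet> c0 = b \<bullet> c0 - 2 * (b \<bullet> al) * (al \<bullet> c0)"
      unfolding b'_def refl_vec_unit[OF Phi_norm[OF alPhi]] by (simp add: inner_diff_left)
    moreover have "al \<bullet> c0 > 0" using al Simp_Pos Pos_c0 by blast
    ultimately have lt: "b' \<bullet> c0 < b \<bullet> c0" using al(2) by (simp add: mult_pos_pos)
    have "{x\<in>Pos. x \<bullet> c0 < b' \<bullet> c0} \<subset> {x\<in>Pos. x \<bullet> c0 < b \<bullet> c0}"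
    proof
      show "{x\<in>Pos. x \<bullet> c0 < b' \<bullet> c0} \<subseteq> {x\<in>Pos. x \<bullet> c0 < b \<bullet> c0}" using lt by auto
      show "{x\<in>Pos. x \<bullet> c0 < b' \<bullet> c0} \<noteq> {x\<in>Pos. x \<bullet> c0 < b \<bullet> c0}" using lt b'P by blast
    qed
    hence "card {x\<in>Pos. x \<bullet> c0 < b' \<bullet> c0} < card {x\<in>Pos. x \<bullet> c0 < b \<bullet> c0}"
      by (rule psubset_card_mono[rotated]) (use finite_Pos in auto)
    from less.hyps[OF this b'P] obtain l al' where l: "set l \<subseteq> Simp" "al' \<in> Simp" "b' = wd l al'" by blast
    have "b = refl_vec al b'" unfolding b'_def using refl_vec_invol[OF a0] by simp
    hence "b = wd (al # l) al'" using l(3) by simp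
    moreover have "set (al # l) \<subseteq> Simp" using l(1) al(1) by simp
    ultimately show ?thesis using l(2) by blast
  qed
qed

lemma Simp_list_Phi: "set l \<subseteq> Simp \<Longrightarrow> set l \<subseteq> Phi" using Simp_Phi by blast

lemma refl_W0: assumes "b \<in> Pos" shows "\<exists>l. set l \<subseteq> Simp \<and> refl_vec b = wd l"
proof -
  obtain l al where l: "set l \<subseteq> Simp" "al \<in> Simp" "b = wd l al" using conj_root assms by blast
  have wW: "wd l \<in> W" using wd_W Simp_list_Phi l(1) by blast
  have a0: "al \<noteq> 0" using l(2) Simp_Phi Phi_nz by blast
  have "refl_vec b = wd l \<circ> refl_vec al \<circ> ginv (wd l)" using conj_refl[OF wW a0] l(3) by simp
  also have "\<dots> = wd (l @ [al] @ rev l)" using ginv_wd[OF Simp_list_Phi[OF l(1)]] by (simp add: wd_append comp_assoc)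
  finally have "refl_vec b = wd (l @ [al] @ rev l)" .
  moreover have "set (l @ [al] @ rev l) \<subseteq> Simp" using l by auto
  ultimately show ?thesis by blast
qed

lemma W_W0: assumes "w \<in> W" shows "\<exists>l. set l \<subseteq> Simp \<and> w = wd l"
proof -
  obtain rs where rs: "set rs \<subseteq> reflections W" "w = foldr (\<circ>) rs id" using genW assms by blast
  have "\<exists>l. set l \<subseteq> Simp \<and> foldr (\<circ>) rs id = wd l" using rs(1)
  proof (induction rs)
    case Nil
    have "set [] \<subseteq> Simp \<and> foldr (\<circ>) [] id = wd []" by simp
    thus ?case by blast
  next
    case (Cons r rs)
    have "set rs \<subseteq> reflections W" using Cons.prems by simp
    then obtain l2 where l2: "set l2 \<subseteq> Simp" "foldr (\<circ>) rs id = wd l2" using Cons.IH by blast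
    have "r \<in> reflections W" using Cons.prems by simp
    then obtain a where a: "a \<noteq> 0" "r = refl_vec a" "r \<in> W" unfolding reflections_def by blast
    have aR: "a \<in> roots W" unfolding roots_def using a by blast
    define u where "u = (1 / norm a) *\<^sub>R a"
    have uPhi: "u \<in> Phi" unfolding u_def using roots_unit(1)[OF aR] .
    have ru: "refl_vec a = refl_vec u" unfolding u_def using a(1) refl_vec_scale[of "1 / norm a" a] by simp
    have "\<exists>l1. set l1 \<subseteq> Simp \<and> r = wd l1"
    proof (cases "u \<in> Pos")
      case True thus ?thesis using refl_W0 a(2) ru by metis
    next
      case False
      hence "- u \<in> Pos" using Phi_cases uPhi by blast
      moreover have "refl_vec (- u) = refl_vec u" using refl_vec_scale[of "-1" u] by simp
      ultimately show ?thesis using refl_W0 a(2) ru by metis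
    qed
    then obtain l1 where l1: "set l1 \<subseteq> Simp" "r = wd l1" by blast
    have "foldr (\<circ>) (r # rs) id = wd (l1 @ l2)" using l1 l2 by (simp add: wd_append)
    moreover have "set (l1 @ l2) \<subseteq> Simp" using l1 l2 by simp
    ultimately show ?case by blast
  qed
  thus ?thesis using rs(2) by simp
qed

lemma D1:
  assumes "set l \<subseteq> Simp" "b \<in> Simp" "wd l b \<bullet> c0 < 0"
  shows "\<exists>l1 a l2. l = l1 @ a # l2 \<and> wd l2 b = a"
  using assms
proof (induction l)
  case Nil
  hence "b \<bullet> c0 < 0" by simp
  thus ?case using Nil Simp_Pos Pos_c0 by (metis not_less_iff_gr_or_eq)
next
  case (Cons a l)
  have aS: "a \<in> Simp" "set l \<subseteq> Simp" using Cons.prems by auto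
  show ?case
  proof (cases "wd l b \<bullet> c0 < 0")
    case True
    from Cons.IH[OF aS(2) Cons.prems(2) True] obtain l1 a' l2 where "l = l1 @ a' # l2" "wd l2 b = a'" by blast
    hence "a # l = (a # l1) @ a' # l2 \<and> wd l2 b = a'" by simp
    thus ?thesis by blast
  next
    case False
    have "wd l b \<in> Phi" using Phi_W wd_W Simp_list_Phi aS(2) Simp_Phi Cons.prems(2) by blast
    hence "wd l b \<in> Pos" using False Phi_cases by blast
    have "wd l b = a"
    proof (rule ccontr)
      assume "wd l b \<noteq> a"
      hence "refl_vec a (wd l b) \<in> Pos" using simple_perm aS(1) \<open>wd l b \<in> Pos\<close> by blast
      moreover have "refl_vec a (wd l b) \<bullet> c0 < 0" using Cons.prems(3) by simp
      ultimately show False using Pos_c0 by fastforce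
    qed
    hence "a # l = [] @ a # l \<and> wd l b = a" by simp
    thus ?thesis by blast
  qed
qed

lemma del_eq:
  assumes "set l2 \<subseteq> Simp" "b \<in> Simp" "wd l2 b = a"
  shows "refl_vec a \<circ> wd l2 \<circ> refl_vec b = wd l2"
proof
  fix x
  have l2P: "set l2 \<subseteq> Phi" using assms(1) Simp_Phi by blast
  have wW: "wd l2 \<in> W" using wd_W l2P by blast
  have b0: "b \<noteq> 0" using assms(2) Simp_Phi Phi_nz by blast
  have ra: "refl_vec a = wd l2 \<circ> refl_vec b \<circ> wd (rev l2)"
    using conj_refl[OF wW b0] ginv_wd[OF l2P] assms(3) by simp
  have "(refl_vec a \<circ> wd l2 \<circ> refl_vec b) x = wd l2 (refl_vec b (wd (rev l2) (wd l2 (refl_vec b x))))"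
    using ra by simp
  also have "\<dots> = wd l2 (refl_vec b (refl_vec b x))" using wd_rev_inv l2P Phi_nz by (metis subsetD)
  also have "\<dots> = wd l2 x" using refl_vec_invol[OF b0] by simp
  finally show "(refl_vec a \<circ> wd l2 \<circ> refl_vec b) x = wd l2 x" .
qed

lemma nn_zero_wd:
  assumes "set l \<subseteq> Simp" "nn (wd l) = 0" shows "wd l = id"
  using assms
proof (induction "length l" arbitrary: l rule: less_induct)
  case less
  show ?case
  proof (cases l rule: rev_exhaust)
    case Nil thus ?thesis by simp
  next
    case (snoc l0 b)
    have l0S: "set l0 \<subseteq> Simp" and bS: "b \<in> Simp" using less.prems(1) snoc by auto
    have wl: "wd l = wd l0 \<circ> refl_vec b" using snoc by (simp add: wd_append)
    have w0W: "wd l0 \<in> W" using wd_W Simp_list_Phi l0S by blast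
    show ?thesis
    proof (cases "wd l0 b \<bullet> c0 < 0")
      case True
      from D1[OF l0S bS True] obtain l1 a l2 where l12: "l0 = l1 @ a # l2" "wd l2 b = a" by blast
      have l2S: "set l2 \<subseteq> Simp" using l0S l12(1) by auto
      have "wd l = wd l1 \<circ> (refl_vec a \<circ> wd l2 \<circ> refl_vec b)" using wl l12(1) by (simp add: wd_append comp_assoc)
      also have "\<dots> = wd (l1 @ l2)" using del_eq[OF l2S bS l12(2)] by (simp add: wd_append)
      finally have e: "wd l = wd (l1 @ l2)" .
      have "length (l1 @ l2) < length l" using snoc l12(1) by simp
      moreover have "set (l1 @ l2) \<subseteq> Simp" using l0S l12(1) by auto
      moreover have "nn (wd (l1 @ l2)) = 0" using e less.prems(2) by simp
      ultimately have "wd (l1 @ l2) = id" using less.hyps by blast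
      thus ?thesis using e by simp
    next
      case False
      have "wd l0 b \<in> Phi" using Phi_W w0W Simp_Phi bS by blast
      hence "wd l0 b \<bullet> c0 > 0" using False gen by (metis linorder_neqE_linordered_idom)
      hence "nn (wd l0 \<circ> refl_vec b) > 0" using n_pos[OF w0W] bS Simp_Pos by blast
      thus ?thesis using less.prems(2) wl by simp
    qed
  qed
qed

lemma Z_trivial: "w \<in> W \<Longrightarrow> nn w = 0 \<Longrightarrow> w = id"
  using W_W0 nn_zero_wd by metis

lemma T1:
  assumes "w \<in> W" "x \<in> Kc" "w x \<in> Kc" shows "w x = x"
  using assms
proof (induction "nn w" arbitrary: w rule: less_induct)
  case less
  show ?case
  proof (cases "nn w = 0")
    case True
    have "w = id" using Z_trivial less.prems(1) True by blast
    thus ?thesis by simp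
  next
    case False
    then obtain b where "b \<in> N w" using finite_N unfolding nn_def by fastforce
    hence "b \<in> Pos" "w b \<bullet> c0 < 0" unfolding N_def by auto
    then obtain al where al: "al \<in> Simp" "w al \<bullet> c0 < 0" using exists_simple_neg less.prems(1) by blast
    have alPhi: "al \<in> Phi" using al Simp_Phi by blast
    have "w al \<in> Phi" using Phi_W alPhi less.prems(1) by blast
    hence nP: "- w al \<in> Pos" using Phi_cases al(2) Pos_c0 by (metis less_asym)
    have "(- w al) \<bullet> w x \<ge> 0" using Kc_pos less.prems(3) nP by blast
    moreover have "w al \<bullet> w x = al \<bullet> x" using innerW less.prems(1) by blast
    moreover have "al \<bullet> x \<ge> 0" using Kc_pos less.prems(2) al Simp_Pos by blast
    ultimately have ax: "al \<bullet> x = 0" by simp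
    have rx: "refl_vec al x = x" using refl_vec_fix ax by blast
    have w'W: "w \<circ> refl_vec al \<in> W" using compW less.prems(1) Phi_refl alPhi by blast
    have "nn (w \<circ> refl_vec al) < nn w" using n_dec less.prems(1) al by blast
    moreover have "(w \<circ> refl_vec al) x \<in> Kc" using rx less.prems(3) by simp
    ultimately have "(w \<circ> refl_vec al) x = x" using less.hyps w'W less.prems(2) by blast
    thus ?thesis using rx by simp
  qed
qed

lemma T2:
  assumes "w \<in> W" "x \<in> Kc" "w x = x" "\<forall>a\<in>Phi. a \<bullet> x = 0 \<longrightarrow> a \<bullet> r = 0" shows "w r = r"
  using assms
proof (induction "nn w" arbitrary: w rule: less_induct)
  case less
  show ?case
  proof (cases "nn w = 0")
    case True
    have "w = id" using Z_trivial less.prems(1) True by blast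
    thus ?thesis by simp
  next
    case False
    then obtain b where "b \<in> N w" using finite_N unfolding nn_def by fastforce
    hence "b \<in> Pos" "w b \<bullet> c0 < 0" unfolding N_def by auto
    then obtain al where al: "al \<in> Simp" "w al \<bullet> c0 < 0" using exists_simple_neg less.prems(1) by blast
    have alPhi: "al \<in> Phi" using al Simp_Phi by blast
    have "w al \<in> Phi" using Phi_W alPhi less.prems(1) by blast
    hence nP: "- w al \<in> Pos" using Phi_cases al(2) Pos_c0 by (metis less_asym)
    have "(- w al) \<bullet> w x \<ge> 0" using Kc_pos less.prems(2,3) nP by metis
    moreover have "w al \<bullet> w x = al \<bullet> x" using innerW less.prems(1) by blast
    moreover have "al \<bullet> x \<ge> 0" using Kc_pos less.prems(2) al Simp_Pos by blast
    ultimately have ax: "al \<bullet> x = 0" by simp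
    have rx: "refl_vec al x = x" using refl_vec_fix ax by blast
    have rr: "refl_vec al r = r" using refl_vec_fix less.prems(4) alPhi ax by blast
    have w'W: "w \<circ> refl_vec al \<in> W" using compW less.prems(1) Phi_refl alPhi by blast
    have "nn (w \<circ> refl_vec al) < nn w" using n_dec less.prems(1) al by blast
    moreover have "(w \<circ> refl_vec al) x = x" using rx less.prems(3) by simp
    ultimately have "(w \<circ> refl_vec al) r = r" using less.hyps w'W less.prems(2,4) by blast
    thus ?thesis using rr by simp
  qed
qed

end


context frg begin

lemma ex_generic: "\<exists>e. \<forall>a\<in>Phi. a \<bullet> e \<noteq> 0"
proof -
  have "negligible (\<Union>((\<lambda>a. {x. a \<bullet> x = 0}) ` Phi))"
  proof (rule negligible_Union)
    show "finite ((\<lambda>a. {x. a \<bullet> x = 0}) ` Phi)" using finite_Phi by blast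
    fix T assume "T \<in> (\<lambda>a. {x. a \<bullet> x = 0}) ` Phi"
    then obtain a where "a \<in> Phi" "T = {x. a \<bullet> x = 0}" by blast
    thus "negligible T" using negligible_hyperplane Phi_nz by blast
  qed
  hence "\<Union>((\<lambda>a. {x. a \<bullet> x = 0}) ` Phi) \<noteq> UNIV" using non_negligible_UNIV by metis
  then obtain e where "e \<notin> \<Union>((\<lambda>a. {x. a \<bullet> x = 0}) ` Phi)" by blast
  thus ?thesis by blast
qed

lemma ex_chamber:
  "\<exists>c0. (\<forall>a\<in>Phi. a \<bullet> c0 \<noteq> 0) \<and> (\<forall>a\<in>Phi. a \<bullet> h > 0 \<longrightarrow> a \<bullet> c0 > 0) \<and> (\<forall>a\<in>Phi. a \<bullet> h < 0 \<longrightarrow> a \<bullet> c0 < 0)"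
proof -
  obtain e where e: "\<forall>a\<in>Phi. a \<bullet> e \<noteq> 0" using ex_generic by blast
  obtain ep where ep: "ep > 0" "\<forall>a\<in>Phi. (a \<bullet> h > 0 \<longrightarrow> a \<bullet> h + ep * (a \<bullet> e) > 0) \<and> (a \<bullet> h < 0 \<longrightarrow> a \<bullet> h + ep * (a \<bullet> e) < 0)"
    using small_pert[OF finite_Phi, of "\<lambda>a. a \<bullet> h" "\<lambda>a. a \<bullet> e"] by blast
  let ?c = "h + ep *\<^sub>R e"
  have ip: "a \<bullet> ?c = a \<bullet> h + ep * (a \<bullet> e)" for a by (simp add: inner_add_right)
  have "\<forall>a\<in>Phi. a \<bullet> ?c \<noteq> 0"
  proof
    fix a assume a: "a \<in> Phi"
    show "a \<bullet> ?c \<noteq> 0"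
    proof (cases "a \<bullet> h = 0")
      case True thus ?thesis using ip e a ep(1) by simp
    next
      case False thus ?thesis using ip ep(2) a by (metis linorder_neqE_linordered_idom less_irrefl)
    qed
  qed
  thus ?thesis using ep(2) ip by metis
qed

lemma closure_Kc:
  assumes gen: "\<forall>a\<in>Phi. a \<bullet> c0 \<noteq> 0" and sp: "\<forall>a\<in>Phi. a \<bullet> h < 0 \<longrightarrow> a \<bullet> c0 < 0"
    and y: "y \<in> closure (arr_face W h)"
  shows "y \<in> chamber.Kc W c0"
proof -
  interpret C: chamber W c0 using frg_axioms gen by (simp add: chamber_def chamber_axioms_def)
  show ?thesis unfolding C.Kc_def C.conD_def
  proof safe
    fix a assume a: "a \<in> C.Pos"
    hence aP: "a \<in> Phi" "a \<bullet> c0 > 0" using C.Pos_Phi C.Pos_c0 by auto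
    have aR: "a \<in> roots W" using aP Phi_roots by blast
    show "a \<bullet> y \<ge> 0"
    proof (cases "a \<bullet> h > 0")
      case True thus ?thesis using closure_face_sign(1)[OF y aR] by blast
    next
      case False
      show ?thesis
      proof (cases "a \<bullet> h = 0")
        case True thus ?thesis using closure_face_sign(2)[OF y aR] by simp
      next
        case False
        hence "a \<bullet> h < 0" using \<open>\<not> a \<bullet> h > 0\<close> by simp
        hence "a \<bullet> c0 < 0" using sp aP(1) by blast
        thus ?thesis using aP(2) by simp
      qed
    qed
  qed
qed

lemma fund_dom:
  assumes w: "w \<in> W" and y: "y \<in> closure (arr_face W h)" and wy: "w y \<in> closure (arr_face W h)"
  shows "w y = y"
proof -
  obtain c0 where c0: "\<forall>a\<in>Phi. a \<bullet> c0 \<noteq> 0" "\<forall>a\<in>Phi. a \<bullet> h < 0 \<longrightarrow> a \<bullet> c0 < 0"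
    using ex_chamber[of h] by blast
  interpret C: chamber W c0 using frg_axioms c0(1) by (simp add: chamber_def chamber_axioms_def)
  show ?thesis using C.T1[OF w closure_Kc[OF c0 y] closure_Kc[OF c0 wy]] .
qed

lemma steinberg:
  assumes w: "w \<in> W" and wx: "w x = x" and r: "\<forall>a\<in>Phi. a \<bullet> x = 0 \<longrightarrow> a \<bullet> r = 0"
  shows "w r = r"
proof -
  obtain c0 where c0: "\<forall>a\<in>Phi. a \<bullet> c0 \<noteq> 0" "\<forall>a\<in>Phi. a \<bullet> x < 0 \<longrightarrow> a \<bullet> c0 < 0"
    using ex_chamber[of x] by blast
  interpret C: chamber W c0 using frg_axioms c0(1) by (simp add: chamber_def chamber_axioms_def)
  have "x \<in> closure (arr_face W x)" using face_self closure_subset by blast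
  hence "x \<in> C.Kc" using closure_Kc[OF c0] by blast
  thus ?thesis using C.T2[OF w _ wx r] by blast
qed

lemma face_fix:
  assumes w: "w \<in> W" and F: "F \<in> arr_faces W" and H: "H \<in> arr_faces W"
    and FH: "F \<subseteq> closure H" and wFH: "w ` F \<subseteq> closure H"
  shows "w ` F = F"
proof -
  obtain f where f: "F = arr_face W f" using F unfolding arr_faces_def by blast
  obtain h where h: "H = arr_face W h" using H unfolding arr_faces_def by blast
  have "f \<in> F" using f face_self by blast
  hence "f \<in> closure H" "w f \<in> closure H" using FH wFH by blast+
  hence "w f = f" using fund_dom w h by blast
  thus ?thesis using face_W[OF w, of f] f by simp
qed

end


definition le2 :: "'b::topological_space set \<times> 'b set \<Rightarrow> 'b set \<times> 'b set \<Rightarrow> bool" where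
  "le2 q p \<longleftrightarrow> face_le (fst q) (fst p) \<and> face_le (snd q) (snd p)"

lemma face_le_refl: "face_le A A" unfolding face_le_def using closure_subset by blast

lemma face_le_trans: "face_le A B \<Longrightarrow> face_le B C \<Longrightarrow> face_le A C"
  unfolding face_le_def by (metis closure_closure closure_mono subset_trans)

lemma le2_refl: "le2 p p" unfolding le2_def using face_le_refl by blast
lemma le2_trans: "le2 a b \<Longrightarrow> le2 b c \<Longrightarrow> le2 a c" unfolding le2_def using face_le_trans by blast

lemma proj_le2: "proj m n p = (THE q. q \<in> n \<and> le2 q p)"
  unfolding proj_def le2_def by simp

definition pact :: "('b \<Rightarrow> 'b) \<Rightarrow> 'b set \<times> 'b set \<Rightarrow> 'b set \<times> 'b set" where
  "pact w p = (w ` fst p, w ` snd p)"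


context frg begin

abbreviation "FF \<equiv> arr_faces W"

lemma face_img: "F \<in> FF \<Longrightarrow> w \<in> W \<Longrightarrow> w ` F \<in> FF"
  unfolding arr_faces_def using face_W by auto

lemma pact_comp: "pact (v \<circ> w) p = pact v (pact w p)"
  unfolding pact_def by (simp add: image_comp)

lemma pact_id: "pact id p = p" unfolding pact_def by simp

lemma mem_orbit: "q \<in> pair_orbit W p \<longleftrightarrow> (\<exists>w\<in>W. q = pact w p)"
  unfolding pair_orbit_def pact_def by auto

lemma Xi_E: assumes "m \<in> Xi W" obtains C D where "C \<in> FF" "D \<in> FF" "m = pair_orbit W (C, D)"
  using assms unfolding Xi_def by auto

lemma Xi_mem_faces: assumes "m \<in> Xi W" "p \<in> m" shows "fst p \<in> FF" "snd p \<in> FF"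
proof -
  obtain C D where CD: "C \<in> FF" "D \<in> FF" "m = pair_orbit W (C, D)" using Xi_E assms(1) by blast
  then obtain w where "w \<in> W" "p = pact w (C, D)" using assms(2) mem_orbit by blast
  thus "fst p \<in> FF" "snd p \<in> FF" using face_img CD unfolding pact_def by auto
qed

lemma Xi_sub: "m \<in> Xi W \<Longrightarrow> m \<subseteq> FF \<times> FF"
  using Xi_mem_faces by fastforce

lemma finite_Xi_mem: "m \<in> Xi W \<Longrightarrow> finite m"
  using Xi_sub finite_faces finite_subset by blast

lemma finite_Xi: "finite (Xi W)"
  unfolding Xi_def using finite_faces by blast

lemma orbit_in_Xi: "fst p \<in> FF \<Longrightarrow> snd p \<in> FF \<Longrightarrow> pair_orbit W p \<in> Xi W"
  unfolding Xi_def by (cases p) auto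

lemma orbit_self: "p \<in> pair_orbit W p"
  using mem_orbit idW pact_id by metis

lemma Xi_pact: assumes "m \<in> Xi W" "p \<in> m" "w \<in> W" shows "pact w p \<in> m"
proof -
  obtain C D where CD: "m = pair_orbit W (C, D)" using Xi_E assms(1) by blast
  then obtain v where "v \<in> W" "p = pact v (C, D)" using assms(2) mem_orbit by blast
  hence "pact w p = pact (w \<circ> v) (C, D)" using pact_comp by metis
  thus ?thesis using CD compW assms(3) \<open>v \<in> W\<close> mem_orbit by blast
qed

lemma Xi_conn: assumes "m \<in> Xi W" "p \<in> m" "p' \<in> m" shows "\<exists>w\<in>W. p' = pact w p"
proof -
  obtain C D where CD: "m = pair_orbit W (C, D)" using Xi_E assms(1) by blast
  obtain v where v: "v \<in> W" "p = pact v (C, D)" using assms(2) CD mem_orbit by blast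
  obtain v' where v': "v' \<in> W" "p' = pact v' (C, D)" using assms(3) CD mem_orbit by blast
  have "pact (v' \<circ> ginv v) p = pact v' (pact (ginv v \<circ> v) (C, D))" using v(2) pact_comp by (metis comp_assoc)
  also have "\<dots> = p'" using ginv(3)[OF v(1)] v'(2) by (simp only: pact_id)
  finally show ?thesis using compW v'(1) ginv(1)[OF v(1)] by metis
qed

lemma Xi_orbit_eq: assumes "m \<in> Xi W" "p \<in> m" shows "pair_orbit W p = m"
proof
  show "pair_orbit W p \<subseteq> m"
  proof
    fix q assume "q \<in> pair_orbit W p"
    then obtain w where "w \<in> W" "q = pact w p" using mem_orbit by blast
    thus "q \<in> m" using Xi_pact assms by blast
  qed
  show "m \<subseteq> pair_orbit W p" using Xi_conn assms mem_orbit by blast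
qed

lemma le2_pact: assumes "w \<in> W" "le2 q p" shows "le2 (pact w q) (pact w p)"
  using assms unfolding le2_def face_le_def pact_def
  by (simp add: closure_W[symmetric] image_mono)

lemma uniq_below:
  assumes n: "n \<in> Xi W" and p: "fst p \<in> FF" "snd p \<in> FF"
    and q1: "q1 \<in> n" "le2 q1 p" and q2: "q2 \<in> n" "le2 q2 p"
  shows "q1 = q2"
proof -
  obtain w where w: "w \<in> W" "q2 = pact w q1" using Xi_conn n q1(1) q2(1) by blast
  have f1: "fst q1 \<in> FF" "snd q1 \<in> FF" using Xi_mem_faces n q1(1) by auto
  have "w ` fst q1 = fst q1"
    by (rule face_fix[OF w(1) f1(1) p(1)]) (use q1(2) q2(2) w(2) in \<open>auto simp: le2_def face_le_def pact_def\<close>)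
  moreover have "w ` snd q1 = snd q1"
    by (rule face_fix[OF w(1) f1(2) p(2)]) (use q1(2) q2(2) w(2) in \<open>auto simp: le2_def face_le_def pact_def\<close>)
  ultimately show ?thesis using w(2) unfolding pact_def by (cases q1) auto
qed

lemma proj_eq:
  assumes n: "n \<in> Xi W" and p: "fst p \<in> FF" "snd p \<in> FF" and q: "q \<in> n" "le2 q p"
  shows "proj m n p = q"
  unfolding proj_le2
  by (rule the_equality) (use q uniq_below[OF n p] in blast)+

definition rel :: "'a xi \<Rightarrow> 'a xi \<Rightarrow> bool" where
  "rel m n \<longleftrightarrow> m \<in> Xi W \<and> n \<in> Xi W \<and> (\<exists>P\<in>m. \<exists>Q\<in>n. le2 Q P)"

lemma ge1_rel: assumes "xi_ge1 W m n" shows "rel m n"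
proof -
  obtain C D C' where h: "(C, D) \<in> m" "(C', D) \<in> n" "face_le C' C" and mn: "m \<in> Xi W" "n \<in> Xi W"
    using assms(1) unfolding xi_ge1_def by blast
  have "le2 (C', D) (C, D)" unfolding le2_def using h(3) face_le_refl by simp
  thus ?thesis unfolding rel_def using h mn by blast
qed

lemma ge2_rel: assumes "xi_ge2 W m n" shows "rel m n"
proof -
  obtain C D D' where h: "(C, D) \<in> m" "(C, D') \<in> n" "face_le D' D" and mn: "m \<in> Xi W" "n \<in> Xi W"
    using assms(1) unfolding xi_ge2_def by blast
  have "le2 (C, D') (C, D)" unfolding le2_def using h(3) face_le_refl by simp
  thus ?thesis unfolding rel_def using h mn by blast
qed

lemma rel_proj: assumes "rel m n" "p \<in> m" shows "proj m n p \<in> n" "le2 (proj m n p) p"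
proof -
  obtain P Q where PQ: "P \<in> m" "Q \<in> n" "le2 Q P" and mn: "m \<in> Xi W" "n \<in> Xi W"
    using assms(1) unfolding rel_def by blast
  obtain w where w: "w \<in> W" "p = pact w P" using Xi_conn mn(1) PQ(1) assms(2) by blast
  have q: "pact w Q \<in> n" "le2 (pact w Q) p" using Xi_pact mn(2) PQ(2) w le2_pact PQ(3) by auto
  have "proj m n p = pact w Q" using proj_eq[OF mn(2) Xi_mem_faces[OF mn(1) assms(2)] q] .
  thus "proj m n p \<in> n" "le2 (proj m n p) p" using q by auto
qed

lemma rel_surj: assumes "rel m n" "q \<in> n" shows "\<exists>p\<in>m. proj m n p = q"
proof -
  obtain P Q where PQ: "P \<in> m" "Q \<in> n" "le2 Q P" and mn: "m \<in> Xi W" "n \<in> Xi W"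
    using assms(1) unfolding rel_def by blast
  obtain w where w: "w \<in> W" "q = pact w Q" using Xi_conn mn(2) PQ(2) assms(2) by blast
  have p: "pact w P \<in> m" using Xi_pact mn(1) PQ(1) w(1) by blast
  have "le2 q (pact w P)" using w le2_pact PQ(3) by blast
  hence "proj m n (pact w P) = q" using proj_eq[OF mn(2) Xi_mem_faces[OF mn(1) p] assms(2)] by blast
  thus ?thesis using p by blast
qed

lemma ge1_snd: assumes "xi_ge1 W m n" "p \<in> m" shows "snd (proj m n p) = snd p"
proof -
  obtain C D C' where h: "(C, D) \<in> m" "(C', D) \<in> n" "face_le C' C" and mn: "m \<in> Xi W" "n \<in> Xi W"
    using assms(1) unfolding xi_ge1_def by blast
  obtain w where w: "w \<in> W" "p = pact w (C, D)" using Xi_conn mn(1) h(1) assms(2) by blast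
  have "le2 (C', D) (C, D)" unfolding le2_def using h(3) face_le_refl by simp
  hence q: "pact w (C', D) \<in> n" "le2 (pact w (C', D)) p" using Xi_pact mn(2) h(2) w le2_pact by auto
  have "proj m n p = pact w (C', D)" using proj_eq[OF mn(2) Xi_mem_faces[OF mn(1) assms(2)] q] .
  thus ?thesis using w(2) unfolding pact_def by simp
qed

lemma ge2_fst: assumes "xi_ge2 W m n" "p \<in> m" shows "fst (proj m n p) = fst p"
proof -
  obtain C D D' where h: "(C, D) \<in> m" "(C, D') \<in> n" "face_le D' D" and mn: "m \<in> Xi W" "n \<in> Xi W"
    using assms(1) unfolding xi_ge2_def by blast
  obtain w where w: "w \<in> W" "p = pact w (C, D)" using Xi_conn mn(1) h(1) assms(2) by blast
  have "le2 (C, D') (C, D)" unfolding le2_def using h(3) face_le_refl by simp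
  hence q: "pact w (C, D') \<in> n" "le2 (pact w (C, D')) p" using Xi_pact mn(2) h(2) w le2_pact by auto
  have "proj m n p = pact w (C, D')" using proj_eq[OF mn(2) Xi_mem_faces[OF mn(1) assms(2)] q] .
  thus ?thesis using w(2) unfolding pact_def by simp
qed

lemma proj_comp:
  assumes "rel m n" "rel n q" "p \<in> m"
  shows "proj m q p = proj n q (proj m n p)"
proof -
  have r: "proj m n p \<in> n" "le2 (proj m n p) p" using rel_proj assms(1,3) by auto
  have s: "proj n q (proj m n p) \<in> q" "le2 (proj n q (proj m n p)) (proj m n p)" using rel_proj assms(2) r(1) by auto
  have mq: "m \<in> Xi W" "q \<in> Xi W" using assms unfolding rel_def by auto
  show ?thesis using proj_eq[OF mq(2) Xi_mem_faces[OF mq(1) assms(3)] s(1)] le2_trans[OF s(2) r(2)] by blast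
qed

end


context frg begin

definition RtU :: "'a \<Rightarrow> 'a \<Rightarrow> 'a set" where "RtU c d = {a\<in>Phi. a \<bullet> c = 0 \<and> a \<bullet> d = 0}"

lemma finite_RtU: "finite (RtU c d)" unfolding RtU_def using finite_Phi by auto

lemma stratum_card:
  assumes st: "cell W m \<subseteq> stratum W L" and CD: "(C, D) \<in> m" "c \<in> C" "d \<in> D"
  shows "card (RtU c d) = card {a\<in>Phi. \<forall>v\<in>L. a \<bullet> v = 0}"
proof -
  let ?RL = "{a\<in>Phi. \<forall>v\<in>L. a \<bullet> v = 0}"
  have "pt_orbit W (d, c) \<in> cell W m" unfolding cell_def using CD by blast
  hence "pt_orbit W (d, c) \<in> stratum W L" using st by blast
  then obtain z where z: "z \<in> generic_part W L" "pt_orbit W z = pt_orbit W (d, c)"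
    unfolding stratum_def by auto
  have "(d, c) = (id (fst (d, c)), id (snd (d, c)))" by simp
  hence "(d, c) \<in> pt_orbit W (d, c)" unfolding pt_orbit_def using idW by blast
  hence "(d, c) \<in> pt_orbit W z" using z(2) by simp
  then obtain u where u: "u \<in> W" "d = u (fst z)" "c = u (snd z)" unfolding pt_orbit_def by auto
  have zall: "fst z \<in> L \<and> snd z \<in> L \<and> (\<forall>a\<in>roots W. a \<bullet> fst z = 0 \<and> a \<bullet> snd z = 0 \<longrightarrow> (\<forall>v\<in>L. a \<bullet> v = 0))"
    using z(1) unfolding generic_part_def by (rule CollectD)
  hence zL: "fst z \<in> L" "snd z \<in> L"
    and zg: "\<forall>a\<in>roots W. a \<bullet> fst z = 0 \<and> a \<bullet> snd z = 0 \<longrightarrow> (\<forall>v\<in>L. a \<bullet> v = 0)"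
    by blast+
  have eq: "RtU c d = u ` ?RL"
  proof
    show "RtU c d \<subseteq> u ` ?RL"
    proof
      fix a assume a: "a \<in> RtU c d"
      hence aP: "a \<in> Phi" "a \<bullet> c = 0" "a \<bullet> d = 0" unfolding RtU_def by auto
      have gP: "ginv u a \<in> Phi" using Phi_W aP(1) ginv(1) u(1) by blast
      have "ginv u a \<bullet> fst z = a \<bullet> u (fst z)" using inner_W_left[OF u(1), of a "fst z"] by simp
      also have "\<dots> = 0" using aP(3) u(2) by simp
      finally have g1: "ginv u a \<bullet> fst z = 0" .
      have "ginv u a \<bullet> snd z = a \<bullet> u (snd z)" using inner_W_left[OF u(1), of a "snd z"] by simp
      also have "\<dots> = 0" using aP(2) u(3) by simp
      finally have g2: "ginv u a \<bullet> snd z = 0" .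
      have "ginv u a \<in> ?RL" using zg gP Phi_roots g1 g2 by blast
      moreover have "a = u (ginv u a)" using ginv_app(1)[OF u(1)] by simp
      ultimately show "a \<in> u ` ?RL" by blast
    qed
    show "u ` ?RL \<subseteq> RtU c d"
    proof
      fix a assume "a \<in> u ` ?RL"
      then obtain b where b: "b \<in> ?RL" "a = u b" by blast
      have "u b \<bullet> d = b \<bullet> fst z" using innerW[OF u(1), of b "fst z"] u(2) by simp
      moreover have "u b \<bullet> c = b \<bullet> snd z" using innerW[OF u(1), of b "snd z"] u(3) by simp
      moreover have "b \<bullet> fst z = 0" "b \<bullet> snd z = 0" using b(1) zL by auto
      moreover have "u b \<in> Phi" using Phi_W b(1) u(1) by blast
      ultimately show "a \<in> RtU c d" unfolding RtU_def using b(2) by auto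
    qed
  qed
  have inj: "inj_on u ?RL" by (rule inj_on_subset[OF injW[OF u(1)]]) simp
  have "card (u ` ?RL) = card ?RL" by (rule card_image[OF inj])
  thus ?thesis using eq by simp
qed

lemma face_of: "F \<in> FF \<Longrightarrow> \<exists>x. F = arr_face W x" unfolding arr_faces_def by blast

lemma anodyne_inj:
  assumes r: "rel m n" and ss: "same_stratum W m n"
  shows "inj_on (proj m n) m"
proof (rule inj_onI)
  fix p1 p2 assume p1: "p1 \<in> m" and p2: "p2 \<in> m" and eq: "proj m n p1 = proj m n p2"
  have mn: "m \<in> Xi W" "n \<in> Xi W" using r unfolding rel_def by auto
  define q where "q = proj m n p1"
  have q12: "q \<in> n" "le2 q p1" using rel_proj[OF r p1] unfolding q_def by auto
  have q3: "le2 q p2" using rel_proj[OF r p2] eq unfolding q_def by simp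
  have q: "q \<in> n" "le2 q p1" "le2 q p2" using q12 q3 by auto
  obtain w where w: "w \<in> W" "p2 = pact w p1" using Xi_conn mn(1) p1 p2 by blast
  have pw1: "pact w q \<in> n" using Xi_pact[OF mn(2) q(1) w(1)] .
  have pw2: "le2 (pact w q) p2" using le2_pact[OF w(1) q(2)] w(2) by simp
  have pq: "pact w q = q" using uniq_below[OF mn(2) Xi_mem_faces[OF mn(1) p2] pw1 pw2 q(1) q(3)] .
  have "fst (pact w q) = fst q" "snd (pact w q) = snd q" using pq by simp_all
  hence wq: "w ` fst q = fst q" "w ` snd q = snd q" unfolding pact_def by simp_all
  have fq: "fst q \<in> FF" "snd q \<in> FF" using Xi_mem_faces[OF mn(2) q(1)] by auto
  have fp: "fst p1 \<in> FF" "snd p1 \<in> FF" using Xi_mem_faces[OF mn(1) p1] by auto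
  obtain a' where a': "fst q = arr_face W a'" using face_of[OF fq(1)] by blast
  obtain b' where b': "snd q = arr_face W b'" using face_of[OF fq(2)] by blast
  obtain a1 where a1: "fst p1 = arr_face W a1" using face_of[OF fp(1)] by blast
  obtain b1 where b1: "snd p1 = arr_face W b1" using face_of[OF fp(2)] by blast
  have a'q: "a' \<in> fst q" "b' \<in> snd q" using a' b' face_self by auto
  have a1p: "a1 \<in> fst p1" "b1 \<in> snd p1" using a1 b1 face_self by auto
  have wa': "w a' = a'"
  proof (rule fund_dom[OF w(1)])
    show "a' \<in> closure (arr_face W a')" using face_self closure_subset by blast
    have "w a' \<in> fst q" using wq(1) a'q(1) by blast
    thus "w a' \<in> closure (arr_face W a')" using a' closure_subset by blast
  qed
  have wb': "w b' = b'"
  proof (rule fund_dom[OF w(1)])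
    show "b' \<in> closure (arr_face W b')" using face_self closure_subset by blast
    have "w b' \<in> snd q" using wq(2) a'q(2) by blast
    thus "w b' \<in> closure (arr_face W b')" using b' closure_subset by blast
  qed
  have q2': "fst q \<subseteq> closure (fst p1)" "snd q \<subseteq> closure (snd p1)" using q(2) unfolding le2_def face_le_def by auto
  have sub: "RtU a1 b1 \<subseteq> RtU a' b'"
  proof
    fix a assume "a \<in> RtU a1 b1"
    hence a: "a \<in> Phi" "a \<bullet> a1 = 0" "a \<bullet> b1 = 0" unfolding RtU_def by auto
    have aR: "a \<in> roots W" using a(1) Phi_roots by blast
    have "a' \<in> closure (arr_face W a1)" using subsetD[OF q2'(1) a'q(1)] a1 by simp
    hence "a \<bullet> a' = 0" using closure_face_sign(2)[OF _ aR] a(2) by blast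
    moreover have "b' \<in> closure (arr_face W b1)" using subsetD[OF q2'(2) a'q(2)] b1 by simp
    hence "a \<bullet> b' = 0" using closure_face_sign(2)[OF _ aR] a(3) by blast
    ultimately show "a \<in> RtU a' b'" unfolding RtU_def using a(1) by blast
  qed
  obtain L where L: "cell W m \<subseteq> stratum W L" "cell W n \<subseteq> stratum W L" using ss unfolding same_stratum_def by blast
  have pm: "(fst p1, snd p1) \<in> m" using p1 by simp
  have c1: "card (RtU a1 b1) = card {a\<in>Phi. \<forall>v\<in>L. a \<bullet> v = 0}"
    using stratum_card[OF L(1) pm a1p(1) a1p(2)] .
  have qn: "(fst q, snd q) \<in> n" using q(1) by simp
  have c2: "card (RtU a' b') = card {a\<in>Phi. \<forall>v\<in>L. a \<bullet> v = 0}"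
    using stratum_card[OF L(2) qn a'q(1) a'q(2)] .
  have Req: "RtU a1 b1 = RtU a' b'" using card_subset_eq[OF finite_RtU sub] c1 c2 by simp
  have "finite ((\<lambda>a. - (a \<bullet> a') / (a \<bullet> b')) ` Phi)" using finite_Phi by simp
  then obtain t :: real where t: "t \<notin> (\<lambda>a. - (a \<bullet> a') / (a \<bullet> b')) ` Phi"
    using ex_new_if_finite[OF infinite_UNIV_char_0] by blast
  define z where "z = a' + t *\<^sub>R b'"
  have zprop: "a \<bullet> a' = 0 \<and> a \<bullet> b' = 0" if a: "a \<in> Phi" "a \<bullet> z = 0" for a
  proof -
    have e: "a \<bullet> a' + t * (a \<bullet> b') = 0" using a(2) unfolding z_def by (simp add: inner_add_right)
    have "a \<bullet> b' = 0"
    proof (rule ccontr)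
      assume nz: "a \<bullet> b' \<noteq> 0"
      hence "t = - (a \<bullet> a') / (a \<bullet> b')" using e by (simp add: field_simps)
      thus False using t a(1) by blast
    qed
    thus ?thesis using e by simp
  qed
  have lw: "linear w" using linW[OF w(1)] .
  have "w z = w a' + t *\<^sub>R w b'" unfolding z_def using linear_add[OF lw] linear_scale[OF lw] by simp
  hence wz: "w z = z" unfolding z_def using wa' wb' by simp
  have hz: "a \<in> RtU a1 b1" if "a \<in> Phi" "a \<bullet> z = 0" for a
    using zprop[OF that] that(1) Req unfolding RtU_def by blast
  have h1: "\<forall>a\<in>Phi. a \<bullet> z = 0 \<longrightarrow> a \<bullet> a1 = 0" using hz unfolding RtU_def by blast
  have h2: "\<forall>a\<in>Phi. a \<bullet> z = 0 \<longrightarrow> a \<bullet> b1 = 0" using hz unfolding RtU_def by blast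
  have wa1: "w a1 = a1" using steinberg[OF w(1) wz h1] .
  have wb1: "w b1 = b1" using steinberg[OF w(1) wz h2] .
  have "pact w p1 = (w ` arr_face W a1, w ` arr_face W b1)" unfolding pact_def using a1 b1 by simp
  also have "\<dots> = (arr_face W a1, arr_face W b1)" using face_W[OF w(1)] wa1 wb1 by simp
  also have "\<dots> = p1" using a1 b1 by (metis prod.collapse)
  finally show "p1 = p2" using w(2) by simp
qed

lemma Fun_zero: assumes "f \<in> Fun_space m" "p \<notin> m" shows "f p = 0"
proof -
  have "\<forall>p. p \<notin> m \<longrightarrow> f p = 0" using assms(1) unfolding Fun_space_def by (rule CollectD)
  thus ?thesis using assms(2) by blast
qed

lemma fiber_single:
  assumes "inj_on (proj m n) m" "p0 \<in> m"
  shows "{p\<in>m. proj m n p = proj m n p0} = {p0}"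
  using assms by (auto simp: inj_on_def)

lemma push_at:
  assumes r: "rel m n" and inj: "inj_on (proj m n) m" and p: "p \<in> m"
  shows "push m n f (proj m n p) = f p"
  unfolding push_def using rel_proj[OF r p] fiber_single[OF inj p] by simp

lemma push_bij:
  assumes r: "rel m n" and inj: "inj_on (proj m n) m"
  shows "bij_betw (push m n :: ('a set \<times> 'a set \<Rightarrow> 'k::comm_monoid_add) \<Rightarrow> _) (Fun_space m) (Fun_space n)"
  unfolding bij_betw_def
proof
  show "inj_on (push m n) (Fun_space m)"
  proof (rule inj_onI)
    fix f g assume f: "f \<in> Fun_space m" and g: "g \<in> Fun_space m" and e: "push m n f = push m n g"
    show "f = g"
    proof
      fix p show "f p = g p"
      proof (cases "p \<in> m")
        case True thus ?thesis using push_at[OF r inj True, of f] push_at[OF r inj True, of g] e by metis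
      next
        case False
        have "f p = 0" "g p = 0" using Fun_zero[OF f False] Fun_zero[OF g False] by simp_all
        thus ?thesis by simp
      qed
    qed
  qed
  show "push m n ` Fun_space m = (Fun_space n :: ('a set \<times> 'a set \<Rightarrow> 'k) set)"
  proof
    show "push m n ` Fun_space m \<subseteq> (Fun_space n :: ('a set \<times> 'a set \<Rightarrow> 'k) set)" unfolding Fun_space_def push_def by auto
    show "Fun_space n \<subseteq> push m n ` (Fun_space m :: ('a set \<times> 'a set \<Rightarrow> 'k) set)"
    proof
      fix g :: "'a set \<times> 'a set \<Rightarrow> 'k" assume g: "g \<in> Fun_space n"
      define f where "f = (\<lambda>p. if p \<in> m then g (proj m n p) else 0)"
      have fF: "f \<in> Fun_space m" unfolding Fun_space_def f_def by auto
      have "push m n f = g"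
      proof
        fix q show "push m n f q = g q"
        proof (cases "q \<in> n")
          case True
          then obtain p0 where p0: "p0 \<in> m" "proj m n p0 = q" using rel_surj[OF r] by blast
          thus ?thesis using push_at[OF r inj p0(1), of f] unfolding f_def by simp
        next
          case False
          have "g q = 0" using Fun_zero[OF g False] .
          thus ?thesis unfolding push_def using False by simp
        qed
      qed
      thus "g \<in> push m n ` Fun_space m" using fF by blast
    qed
  qed
qed

lemma pull_bij:
  assumes r: "rel m n" and inj: "inj_on (proj m n) m"
  shows "bij_betw (pull m n :: ('a set \<times> 'a set \<Rightarrow> 'k::comm_monoid_add) \<Rightarrow> _) (Fun_space n) (Fun_space m)"
  unfolding bij_betw_def
proof
  show "inj_on (pull m n) (Fun_space n)"
  proof (rule inj_onI)
    fix f g assume f: "f \<in> Fun_space n" and g: "g \<in> Fun_space n" and e: "pull m n f = pull m n g"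
    show "f = g"
    proof
      fix q show "f q = g q"
      proof (cases "q \<in> n")
        case True
        then obtain p0 where p0: "p0 \<in> m" "proj m n p0 = q" using rel_surj[OF r] by blast
        have "pull m n f p0 = pull m n g p0" using e by simp
        thus ?thesis using p0 unfolding pull_def by simp
      next
        case False
        have "f q = 0" "g q = 0" using Fun_zero[OF f False] Fun_zero[OF g False] by simp_all
        thus ?thesis by simp
      qed
    qed
  qed
  show "pull m n ` Fun_space n = (Fun_space m :: ('a set \<times> 'a set \<Rightarrow> 'k) set)"
  proof
    show "pull m n ` Fun_space n \<subseteq> (Fun_space m :: ('a set \<times> 'a set \<Rightarrow> 'k) set)" unfolding Fun_space_def pull_def by auto
    show "Fun_space m \<subseteq> pull m n ` (Fun_space n :: ('a set \<times> 'a set \<Rightarrow> 'k) set)"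
    proof
      fix h :: "'a set \<times> 'a set \<Rightarrow> 'k" assume h: "h \<in> Fun_space m"
      define f where "f = (\<lambda>q. if q \<in> n then h (the_inv_into m (proj m n) q) else 0)"
      have fF: "f \<in> Fun_space n" unfolding Fun_space_def f_def by auto
      have "pull m n f = h"
      proof
        fix p show "pull m n f p = h p"
        proof (cases "p \<in> m")
          case True
          have "proj m n p \<in> n" using rel_proj[OF r True] by blast
          thus ?thesis using True the_inv_into_f_f[OF inj True] unfolding pull_def f_def by simp
        next
          case False
          have "h p = 0" using Fun_zero[OF h False] .
          thus ?thesis unfolding pull_def using False by simp
        qed
      qed
      thus "h \<in> pull m n ` Fun_space n" using fF by blast
    qed
  qed
qed

end


context frg begin

lemma push_id:
  assumes m: "m \<in> Xi W" and f: "f \<in> Fun_space m"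
  shows "push m m f = f"
proof
  fix q show "push m m f q = f q"
  proof (cases "q \<in> m")
    case True
    have "proj m m p = p" if "p \<in> m" for p
      using proj_eq[OF m Xi_mem_faces[OF m that] that le2_refl] .
    hence "{p\<in>m. proj m m p = q} = {q}" using True by auto
    thus ?thesis unfolding push_def using True by simp
  next
    case False
    thus ?thesis unfolding push_def using Fun_zero[OF f False] by simp
  qed
qed

lemma pull_id:
  assumes m: "m \<in> Xi W" and f: "f \<in> Fun_space m"
  shows "pull m m f = f"
proof
  fix q show "pull m m f q = f q"
  proof (cases "q \<in> m")
    case True
    have "proj m m q = q" using proj_eq[OF m Xi_mem_faces[OF m True] True le2_refl] .
    thus ?thesis unfolding pull_def using True by simp
  next
    case False
    thus ?thesis unfolding pull_def using Fun_zero[OF f False] by simp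
  qed
qed

lemma push_comp:
  assumes r1: "rel m n" and r2: "rel n q"
  shows "push n q (push m n f) = push m q f"
proof
  fix x show "push n q (push m n f) x = push m q f x"
  proof (cases "x \<in> q")
    case False thus ?thesis unfolding push_def by simp
  next
    case True
    have fm: "finite m" "finite n" using r1 finite_Xi_mem unfolding rel_def by auto
    let ?S = "{p\<in>m. proj m q p = x}" and ?T = "{r\<in>n. proj n q r = x}"
    have img: "proj m n ` ?S \<subseteq> ?T"
    proof
      fix r assume "r \<in> proj m n ` ?S"
      then obtain p where p: "p \<in> m" "proj m q p = x" "r = proj m n p" by blast
      thus "r \<in> ?T" using rel_proj(1)[OF r1 p(1)] proj_comp[OF r1 r2 p(1)] by simp
    qed
    have inner: "{p\<in>?S. proj m n p = r} = {p\<in>m. proj m n p = r}" if "r \<in> ?T" for r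
      using that proj_comp[OF r1 r2] by auto
    have "push n q (push m n f) x = (\<Sum>r\<in>?T. push m n f r)" unfolding push_def using True by simp
    also have "\<dots> = (\<Sum>r\<in>?T. \<Sum>p\<in>{p\<in>?S. proj m n p = r}. f p)"
    proof (rule sum.cong[OF refl])
      fix r assume "r \<in> ?T"
      thus "push m n f r = (\<Sum>p\<in>{p\<in>?S. proj m n p = r}. f p)" unfolding push_def using inner by simp
    qed
    also have "\<dots> = (\<Sum>p\<in>?S. f p)"
      using sum.group[of ?S ?T "proj m n" f] fm img by simp
    also have "\<dots> = push m q f x" unfolding push_def using True by simp
    finally show ?thesis .
  qed
qed

lemma pull_comp:
  assumes r1: "rel m n" and r2: "rel n q"
  shows "pull m n (pull n q f) = pull m q f"
proof
  fix p show "pull m n (pull n q f) p = pull m q f p"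
  proof (cases "p \<in> m")
    case False thus ?thesis unfolding pull_def by simp
  next
    case True
    thus ?thesis unfolding pull_def using rel_proj(1)[OF r1 True] proj_comp[OF r1 r2 True] by simp
  qed
qed

lemma mbs2:
  assumes g1: "xi_ge1 W m' n'" and g2: "xi_ge2 W n n'"
  shows "pull n n' (push m' n' f) = (\<lambda>x. \<Sum>m\<in>Sup_xi W m' n. push m n (pull m m' f) x)"
proof
  fix x
  have X: "m' \<in> Xi W" "n' \<in> Xi W" "n \<in> Xi W" using g1 g2 unfolding xi_ge1_def xi_ge2_def by auto
  have finSup: "finite (Sup_xi W m' n)"
    by (rule finite_subset[OF _ finite_Xi]) (auto simp: Sup_xi_def xi_ge1_def)
  show "pull n n' (push m' n' f) x = (\<Sum>m\<in>Sup_xi W m' n. push m n (pull m m' f) x)"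
  proof (cases "x \<in> n")
    case False
    thus ?thesis unfolding pull_def push_def by simp
  next
    case True
    define x' where "x' = proj n n' x"
    have x'1: "x' \<in> n'" "le2 x' x" using rel_proj[OF ge2_rel[OF g2] True] unfolding x'_def by auto
    have x'f: "fst x' = fst x" using ge2_fst[OF g2 True] unfolding x'_def .
    have xf: "fst x \<in> FF" "snd x \<in> FF" using Xi_mem_faces[OF X(3) True] by auto
    let ?P = "{p\<in>m'. proj m' n' p = x'}"
    let ?S = "\<lambda>m. {r\<in>m. proj m n r = x}"
    let ?Sig = "SIGMA m:Sup_xi W m' n. ?S m"
    have supE: "xi_ge2 W m m'" "xi_ge1 W m n" "m \<in> Xi W" if "m \<in> Sup_xi W m' n" for m
      using that unfolding Sup_xi_def xi_ge1_def by auto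
    have "pull n n' (push m' n' f) x = (\<Sum>p\<in>?P. f p)"
      unfolding pull_def push_def x'_def[symmetric] using True x'1(1) by simp
    moreover have "(\<Sum>m\<in>Sup_xi W m' n. push m n (pull m m' f) x) = (\<Sum>m\<in>Sup_xi W m' n. \<Sum>r\<in>?S m. f (proj m m' r))"
    proof (rule sum.cong[OF refl])
      fix m assume "m \<in> Sup_xi W m' n"
      have "push m n (pull m m' f) x = (\<Sum>r\<in>?S m. pull m m' f r)" unfolding push_def using True by simp
      also have "\<dots> = (\<Sum>r\<in>?S m. f (proj m m' r))" by (rule sum.cong) (auto simp: pull_def)
      finally show "push m n (pull m m' f) x = (\<Sum>r\<in>?S m. f (proj m m' r))" .
    qed
    moreover have "(\<Sum>m\<in>Sup_xi W m' n. \<Sum>r\<in>?S m. f (proj m m' r)) = (\<Sum>(m, r)\<in>?Sig. f (proj m m' r))"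
      by (rule sum.Sigma[OF finSup]) (use supE finite_Xi_mem in auto)
    moreover have "(\<Sum>(m, r)\<in>?Sig. f (proj m m' r)) = (\<Sum>p\<in>?P. f p)"
    proof (rule sum.reindex_bij_witness[where i = "\<lambda>p. (pair_orbit W (fst p, snd x), (fst p, snd x))"
          and j = "\<lambda>(m, r). proj m m' r"])
      fix a assume a: "a \<in> ?Sig"
      obtain m r where ar: "a = (m, r)" by (cases a)
      have m: "m \<in> Sup_xi W m' n" and r: "r \<in> m" "proj m n r = x" using a ar by auto
      have mm: "xi_ge2 W m m'" "xi_ge1 W m n" "m \<in> Xi W" using supE[OF m] by auto
      have sx: "snd x = snd r" using ge1_snd[OF mm(2) r(1)] r(2) by simp
      have fp: "fst (proj m m' r) = fst r" using ge2_fst[OF mm(1) r(1)] .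
      have e: "(fst (proj m m' r), snd x) = r" using sx fp by simp
      have e2: "pair_orbit W r = m" using Xi_orbit_eq[OF mm(3) r(1)] .
      show "(\<lambda>p. (pair_orbit W (fst p, snd x), (fst p, snd x))) ((\<lambda>(m, r). proj m m' r) a) = a"
        using ar e e2 by simp
      have p1: "proj m m' r \<in> m'" "le2 (proj m m' r) r" using rel_proj[OF ge2_rel[OF mm(1)] r(1)] by auto
      have p2: "proj m' n' (proj m m' r) \<in> n'" "le2 (proj m' n' (proj m m' r)) (proj m m' r)"
        using rel_proj[OF ge1_rel[OF g1] p1(1)] by auto
      have xr: "le2 x r" using rel_proj(2)[OF ge2_rel[OF mm(1)] r(1)] rel_proj(2)[OF ge1_rel[OF mm(2)] r(1)] r(2) by simp
      have rf: "fst r \<in> FF" "snd r \<in> FF" using Xi_mem_faces[OF mm(3) r(1)] by auto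
      have "proj m' n' (proj m m' r) = x'"
        using uniq_below[OF X(2) rf p2(1) le2_trans[OF p2(2) p1(2)] x'1(1) le2_trans[OF x'1(2) xr]] .
      thus "(\<lambda>(m, r). proj m m' r) a \<in> ?P" using p1(1) ar by simp
      show "f ((\<lambda>(m, r). proj m m' r) a) = (case a of (m, r) \<Rightarrow> f (proj m m' r))" using ar by simp
    next
      fix p assume p: "p \<in> ?P"
      have pm: "p \<in> m'" "proj m' n' p = x'" using p by auto
      have sp: "snd p = snd x'" using ge1_snd[OF g1 pm(1)] pm(2) by simp
      have lp: "le2 x' p" using rel_proj(2)[OF ge1_rel[OF g1] pm(1)] pm(2) by simp
      have pf: "fst p \<in> FF" "snd p \<in> FF" using Xi_mem_faces[OF X(1) pm(1)] by auto
      define r where "r = (fst p, snd x)"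
      define m where "m = pair_orbit W r"
      have rf: "fst r \<in> FF" "snd r \<in> FF" unfolding r_def using pf xf by auto
      have mX: "m \<in> Xi W" unfolding m_def using orbit_in_Xi[OF rf] .
      have rm: "r \<in> m" unfolding m_def using orbit_self .
      have fle: "face_le (fst x) (fst p)" using lp x'f unfolding le2_def by simp
      have sle: "face_le (snd p) (snd x)" using x'1(2) sp unfolding le2_def by simp
      have lpr: "le2 p r" unfolding r_def le2_def using face_le_refl sle by simp
      have lxr: "le2 x r" unfolding r_def le2_def using face_le_refl fle by simp
      have jp: "proj m m' r = p" using proj_eq[OF X(1) rf pm(1) lpr] .
      thus "(\<lambda>(m, r). proj m m' r) ((\<lambda>p. (pair_orbit W (fst p, snd x), (fst p, snd x))) p) = p"
        unfolding m_def r_def by simp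
      have "(fst p, snd x) \<in> m \<and> (fst p, snd p) \<in> m' \<and> face_le (snd p) (snd x)"
        using rm pm(1) sle unfolding r_def by simp
      hence "\<exists>C D D'. (C, D) \<in> m \<and> (C, D') \<in> m' \<and> face_le D' D" by blast
      hence ge2: "xi_ge2 W m m'" unfolding xi_ge2_def using mX X(1) by blast
      have "(fst p, snd x) \<in> m \<and> (fst x, snd x) \<in> n \<and> face_le (fst x) (fst p)"
        using rm True fle unfolding r_def by simp
      hence "\<exists>C D C'. (C, D) \<in> m \<and> (C', D) \<in> n \<and> face_le C' C" by blast
      hence ge1: "xi_ge1 W m n" unfolding xi_ge1_def using mX X(3) by blast
      have "m \<in> Sup_xi W m' n" unfolding Sup_xi_def using ge1 ge2 by simp
      moreover have "proj m n r = x" using proj_eq[OF X(3) rf True lxr] .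
      ultimately show "(\<lambda>p. (pair_orbit W (fst p, snd x), (fst p, snd x))) p \<in> ?Sig"
        using rm unfolding m_def r_def by simp
    qed
    ultimately show ?thesis by simp
  qed
qed

end

theorem proposition7p6:
  fixes W :: "('a::euclidean_space \<Rightarrow> 'a) set"
  assumes "finite_reflection_group W"
    and "crystallographic W"
    and "\<forall>p :: 'k::field_char_0 poly. degree p > 0 \<longrightarrow> (\<exists>x. poly p x = 0)"
  shows "mixed_Bruhat_sheaf W (Fun_space :: 'a xi \<Rightarrow> ('a set \<times> 'a set \<Rightarrow> 'k) set) push pull"
proof -
  interpret frg W using assms(1) by (simp add: frg_def)
  let ?E = "Fun_space :: 'a xi \<Rightarrow> ('a set \<times> 'a set \<Rightarrow> 'k) set"
  have h1: "\<forall>m\<in>Xi W. (\<lambda>_. 0) \<in> ?E m \<and> (\<forall>f\<in>?E m. \<forall>g\<in>?E m. (\<lambda>x. f x + g x) \<in> ?E m) \<and>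
        (\<forall>c. \<forall>f\<in>?E m. (\<lambda>x. c * f x) \<in> ?E m)"
    unfolding Fun_space_def by simp
  have h2: "\<forall>m n. xi_ge1 W m n \<longrightarrow>
        (\<forall>f\<in>?E m. push m n f \<in> ?E n) \<and>
        (\<forall>f\<in>?E m. \<forall>g\<in>?E m. push m n (\<lambda>x. f x + g x) = (\<lambda>x. push m n f x + push m n g x)) \<and>
        (\<forall>c. \<forall>f\<in>?E m. push m n (\<lambda>x. c * f x) = (\<lambda>x. c * push m n f x))"
    unfolding Fun_space_def push_def by (simp add: sum.distrib sum_distrib_left fun_eq_iff)
  have h3: "\<forall>m n. xi_ge2 W m n \<longrightarrow>
        (\<forall>f\<in>?E n. pull m n f \<in> ?E m) \<and>
        (\<forall>f\<in>?E n. \<forall>g\<in>?E n. pull m n (\<lambda>x. f x + g x) = (\<lambda>x. pull m n f x + pull m n g x)) \<and>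
        (\<forall>c. \<forall>f\<in>?E n. pull m n (\<lambda>x. c * f x) = (\<lambda>x. c * pull m n f x))"
    unfolding Fun_space_def pull_def by (simp add: fun_eq_iff)
  have h4: "\<forall>m\<in>Xi W. \<forall>f\<in>?E m. push m m f = f \<and> pull m m f = f"
    using push_id pull_id by blast
  have h5: "\<forall>m n q. xi_ge1 W m n \<and> xi_ge1 W n q \<longrightarrow> (\<forall>f\<in>?E m. push n q (push m n f) = push m q f)"
    using push_comp ge1_rel by blast
  have h6: "\<forall>m n q. xi_ge2 W m n \<and> xi_ge2 W n q \<longrightarrow> (\<forall>f\<in>?E q. pull m n (pull n q f) = pull m q f)"
    using pull_comp ge2_rel by blast
  have h7: "\<forall>m' n' n. xi_ge1 W m' n' \<and> xi_ge2 W n n' \<longrightarrow>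
        (\<forall>f\<in>?E m'. pull n n' (push m' n' f) = (\<lambda>x. \<Sum>m\<in>Sup_xi W m' n. push m n (pull m m' f) x))"
    using mbs2 by blast
  have h8: "\<forall>m n. xi_ge1 W m n \<and> same_stratum W m n \<longrightarrow> bij_betw (push m n) (?E m) (?E n)"
    using push_bij anodyne_inj ge1_rel by blast
  have h9: "\<forall>m n. xi_ge2 W m n \<and> same_stratum W m n \<longrightarrow> bij_betw (pull m n) (?E n) (?E m)"
    using pull_bij anodyne_inj ge2_rel by blast
  show ?thesis unfolding mixed_Bruhat_sheaf_def
    apply (intro conjI)
    apply (rule h1)
    apply (rule h2)
    apply (rule h3)
    apply (rule h4)
    apply (rule h5)
    apply (rule h6)
    apply (rule h7)
    apply (rule h8)
    apply (rule h9)
    done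
qed

end
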